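(* Let $(\theta_t)_{t\in\mathbb R}$ be a smooth green path, $t_0\in\mathbb R$, and $M\in\mathcal G$ nonzero. Let $M=M_0\supsetneq M_1\supsetneq\cdots\supsetneq M_m=0$ be a chain of strict subobjects of $M$ with $M_{k-1}/M_k\in\mathcal W(\theta_{t_k})$ for real numbers $t_1>t_2>\cdots>t_m$ (such a chain exists and is unique). Then $M\in\mathcal P(\theta_{t_0})$ if and only if $t_k<t_0$ for all $k$, i.e. if and only if $t_1<t_0$.
   Context: Let $\Lambda$ be a finite dimensional algebra over a field with $n$ isoclasses of simple modules, and $\mathrm{mod}\text-\Lambda$ the category of finitely generated right $\Lambda$-modules. Fix a torsion class $\mathcal G\subseteq\mathrm{mod}\text-\Lambda$ (closed under isomorphisms, extensions and quotients). For $B\in\mathcal G$, a subobject of $B$ is a submodule in $\mathcal G$; a subobject $A\subseteq B$ is strict if $A\cap B'\in\mathcal G$ for every subobject $B'$ of $B$; a strict quotient of $B$ is $B/A$ with $A$ a strict subobject. Let $V_\Lambda=\mathrm{Hom}_{\mathbb Z}(K_0\Lambda,\mathbb R)\cong\mathbb R^n$; $\theta(M)$ denotes $\theta$ applied to the dimension vector of $M$. For $M\in\mathcal G$, $D_{\mathcal G}(M)$ is the set of $\theta$ with $\theta(M)=0$ and $\theta(M')\le0$ for every strict subobject $M'$ of $M$; $\mathcal W(\theta)$ is the class of $X\in\mathcal G$ with $\theta\in D_{\mathcal G}(X)$. $\mathcal P(\theta)$ is the class consisting of $0$ and all nonzero $M\in\mathcal G$ with $\theta(M'')>0$ for every nonzero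 strict quotient $M''$ of $M$ (including $M''=M$). A smooth green path is a smooth map $t\mapsto\theta_t$, $\mathbb R\to V_\Lambda$, such that: (1) whenever $\theta_{t_0}\in D_{\mathcal G}(M)$ for some nonzero $M\in\mathcal G$, $\frac{d}{dt}\theta_t(M)|_{t=t_0}>0$; (2) there is $T$ such that $\theta_t(M)>0$ for all $t>T$ and all nonzero $M\in\mathcal G$; (3) there is $T'$ such that $\theta_t(M)<0$ for all $t<T'$ and all nonzero $M\in\mathcal G$. *)

theory Defs
  imports "HOL-Analysis.Analysis"
begin

definition fd_algebra :: "('k::field \<Rightarrow> 'l::ring_1) \<Rightarrow> bool" where
  "fd_algebra \<iota> \<longleftrightarrow>
     \<iota> 1 = 1 \<and> (\<forall>a b. \<iota> (a + b) = \<iota> a + \<iota> b) \<and> (\<forall>a b. \<iota> (a * b) = \<iota> a * \<iota> b) \<and>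
     (\<forall>c x. \<iota> c * x = x * \<iota> c) \<and>
     (\<exists>bs :: 'l list. \<forall>x. \<exists>cs :: 'k list. length cs = length bs \<and>
                         x = (\<Sum>i<length bs. \<iota> (cs ! i) * bs ! i))"

text \<open>Every finitely generated right Lambda-module is finite dimensional over K,
  hence isomorphic to one whose underlying K-vector space is K^d, realised as the
  functions nat => 'k vanishing from d on.  Such a module is given by d and the
  right action rho, with rho l v meaning v.l .\<close>

type_synonym ('k, 'l) rmod = "nat \<times> ('l \<Rightarrow> (nat \<Rightarrow> 'k) \<Rightarrow> (nat \<Rightarrow> 'k))"

definition vzero :: "nat \<Rightarrow> 'k::zero" where "vzero = (\<lambda>_. 0)"
definition vadd :: "(nat \<Rightarrow> 'k::plus) \<Rightarrow> (nat \<Rightarrow> 'k) \<Rightarrow> (nat \<Rightarrow> 'k)" where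
  "vadd v w = (\<lambda>i. v i + w i)"

definition mcar :: "('k::zero, 'l) rmod \<Rightarrow> (nat \<Rightarrow> 'k) set" where
  "mcar M = {v. \<forall>i\<ge>fst M. v i = 0}"

definition act :: "('k, 'l) rmod \<Rightarrow> 'l \<Rightarrow> (nat \<Rightarrow> 'k) \<Rightarrow> (nat \<Rightarrow> 'k)" where
  "act M = snd M"

definition is_rmod :: "('k::field \<Rightarrow> 'l::ring_1) \<Rightarrow> ('k, 'l) rmod \<Rightarrow> bool" where
  "is_rmod \<iota> M \<longleftrightarrow>
     (\<forall>l. \<forall>v\<in>mcar M. act M l v \<in> mcar M) \<and>
     (\<forall>l. \<forall>v\<in>mcar M. \<forall>w\<in>mcar M. act M l (vadd v w) = vadd (act M l v) (act M l w)) \<and>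
     (\<forall>l l'. \<forall>v\<in>mcar M. act M (l + l') v = vadd (act M l v) (act M l' v)) \<and>
     (\<forall>l l'. \<forall>v\<in>mcar M. act M (l * l') v = act M l' (act M l v)) \<and>
     (\<forall>v\<in>mcar M. act M 1 v = v) \<and>
     (\<forall>c. \<forall>v\<in>mcar M. act M (\<iota> c) v = (\<lambda>i. c * v i))"

definition is_submod :: "('k::field, 'l::ring_1) rmod \<Rightarrow> (nat \<Rightarrow> 'k) set \<Rightarrow> bool" where
  "is_submod M U \<longleftrightarrow> U \<subseteq> mcar M \<and> vzero \<in> U \<and>
     (\<forall>u\<in>U. \<forall>w\<in>U. vadd u w \<in> U) \<and> (\<forall>l. \<forall>u\<in>U. act M l u \<in> U)"

text \<open>For submodules A of B of M, sec_iso iota M B A N says that the universe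
  module N is isomorphic to the subquotient B/A (via a surjective module map
  from B onto N with kernel A).\<close>

definition sec_iso :: "('k::field \<Rightarrow> 'l::ring_1) \<Rightarrow> ('k, 'l) rmod \<Rightarrow> (nat \<Rightarrow> 'k) set
     \<Rightarrow> (nat \<Rightarrow> 'k) set \<Rightarrow> ('k, 'l) rmod \<Rightarrow> bool" where
  "sec_iso \<iota> M B A N \<longleftrightarrow> is_rmod \<iota> N \<and>
     (\<exists>f. f ` B = mcar N \<and>
          (\<forall>v\<in>B. \<forall>w\<in>B. f (vadd v w) = vadd (f v) (f w)) \<and>
          (\<forall>l. \<forall>v\<in>B. f (act M l v) = act N l (f v)) \<and>
          {v\<in>B. f v = vzero} = A)"

definition mod_iso :: "('k::field \<Rightarrow> 'l::ring_1) \<Rightarrow> ('k, 'l) rmod \<Rightarrow> ('k, 'l) rmod \<Rightarrow> bool" where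
  "mod_iso \<iota> M N \<longleftrightarrow> sec_iso \<iota> M (mcar M) {vzero} N"

definition nonzero_mod :: "('k::zero, 'l) rmod \<Rightarrow> bool" where
  "nonzero_mod M \<longleftrightarrow> mcar M \<noteq> {vzero}"

definition torsion_class :: "('k::field \<Rightarrow> 'l::ring_1) \<Rightarrow> ('k, 'l) rmod set \<Rightarrow> bool" where
  "torsion_class \<iota> G \<longleftrightarrow>
     (\<forall>M\<in>G. is_rmod \<iota> M) \<and>
     (\<forall>M N. M \<in> G \<longrightarrow> mod_iso \<iota> M N \<longrightarrow> N \<in> G) \<and>
     (\<forall>M U N. M \<in> G \<longrightarrow> is_submod M U \<longrightarrow> sec_iso \<iota> M (mcar M) U N \<longrightarrow> N \<in> G) \<and>
     (\<forall>M U X Y. is_rmod \<iota> M \<longrightarrow> is_submod M U \<longrightarrow> X \<in> G \<longrightarrow> Y \<in> G \<longrightarrow>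
         sec_iso \<iota> M U {vzero} X \<longrightarrow> sec_iso \<iota> M (mcar M) U Y \<longrightarrow> M \<in> G)"

text \<open>B/A lies in G (G is isomorphism closed).\<close>
definition sq_in :: "('k::field \<Rightarrow> 'l::ring_1) \<Rightarrow> ('k, 'l) rmod set \<Rightarrow> ('k, 'l) rmod
     \<Rightarrow> (nat \<Rightarrow> 'k) set \<Rightarrow> (nat \<Rightarrow> 'k) set \<Rightarrow> bool" where
  "sq_in \<iota> G M B A \<longleftrightarrow> (\<exists>N. N \<in> G \<and> sec_iso \<iota> M B A N)"

text \<open>A homomorphism K_0(mod Lambda) -> R is the same as a real valued function
  on modules that is invariant under isomorphism and additive on short exact
  sequences; theta(M) is its value on the class [M] (the dimension vector).\<close>

definition in_V :: "('k::field \<Rightarrow> 'l::ring_1) \<Rightarrow> (('k, 'l) rmod \<Rightarrow> real) \<Rightarrow> bool" where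
  "in_V \<iota> \<theta> \<longleftrightarrow>
     (\<forall>M N. is_rmod \<iota> M \<longrightarrow> mod_iso \<iota> M N \<longrightarrow> \<theta> M = \<theta> N) \<and>
     (\<forall>M U X Y. is_rmod \<iota> M \<longrightarrow> is_submod M U \<longrightarrow>
         sec_iso \<iota> M U {vzero} X \<longrightarrow> sec_iso \<iota> M (mcar M) U Y \<longrightarrow> \<theta> M = \<theta> X + \<theta> Y)"

definition theta_sec :: "('k::field \<Rightarrow> 'l::ring_1) \<Rightarrow> (('k, 'l) rmod \<Rightarrow> real) \<Rightarrow> ('k, 'l) rmod
     \<Rightarrow> (nat \<Rightarrow> 'k) set \<Rightarrow> (nat \<Rightarrow> 'k) set \<Rightarrow> real" where
  "theta_sec \<iota> \<theta> M B A = \<theta> (SOME N. sec_iso \<iota> M B A N)"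

definition subobj :: "('k::field \<Rightarrow> 'l::ring_1) \<Rightarrow> ('k, 'l) rmod set \<Rightarrow> ('k, 'l) rmod
     \<Rightarrow> (nat \<Rightarrow> 'k) set \<Rightarrow> bool" where
  "subobj \<iota> G X A \<longleftrightarrow> is_submod X A \<and> sq_in \<iota> G X A {vzero}"

definition strict_subobj :: "('k::field \<Rightarrow> 'l::ring_1) \<Rightarrow> ('k, 'l) rmod set \<Rightarrow> ('k, 'l) rmod
     \<Rightarrow> (nat \<Rightarrow> 'k) set \<Rightarrow> bool" where
  "strict_subobj \<iota> G X A \<longleftrightarrow> subobj \<iota> G X A \<and>
     (\<forall>B'. subobj \<iota> G X B' \<longrightarrow> sq_in \<iota> G X (A \<inter> B') {vzero})"

definition DG :: "('k::field \<Rightarrow> 'l::ring_1) \<Rightarrow> ('k, 'l) rmod set \<Rightarrow> ('k, 'l) rmod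
     \<Rightarrow> (('k, 'l) rmod \<Rightarrow> real) set" where
  "DG \<iota> G X = {\<theta>. \<theta> X = 0 \<and>
     (\<forall>A. strict_subobj \<iota> G X A \<longrightarrow> theta_sec \<iota> \<theta> X A {vzero} \<le> 0)}"

definition WG :: "('k::field \<Rightarrow> 'l::ring_1) \<Rightarrow> ('k, 'l) rmod set \<Rightarrow> (('k, 'l) rmod \<Rightarrow> real)
     \<Rightarrow> ('k, 'l) rmod set" where
  "WG \<iota> G \<theta> = {X. X \<in> G \<and> \<theta> \<in> DG \<iota> G X}"

definition PG :: "('k::field \<Rightarrow> 'l::ring_1) \<Rightarrow> ('k, 'l) rmod set \<Rightarrow> (('k, 'l) rmod \<Rightarrow> real)
     \<Rightarrow> ('k, 'l) rmod set" where
  "PG \<iota> G \<theta> = {X. (is_rmod \<iota> X \<and> \<not> nonzero_mod X) \<or>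
     (X \<in> G \<and> nonzero_mod X \<and>
      (\<forall>A. strict_subobj \<iota> G X A \<longrightarrow> A \<noteq> mcar X \<longrightarrow> theta_sec \<iota> \<theta> X (mcar X) A > 0))}"

definition smooth_real :: "(real \<Rightarrow> real) \<Rightarrow> bool" where
  "smooth_real f \<longleftrightarrow> (\<exists>D :: nat \<Rightarrow> real \<Rightarrow> real. D 0 = f \<and>
      (\<forall>n t. (D n has_real_derivative D (Suc n) t) (at t)))"

text \<open>Smoothness of t -> theta_t into V_Lambda (= R^n) is smoothness of every
  coordinate t -> theta_t(M).\<close>
definition smooth_green_path :: "('k::field \<Rightarrow> 'l::ring_1) \<Rightarrow> ('k, 'l) rmod set
     \<Rightarrow> (real \<Rightarrow> ('k, 'l) rmod \<Rightarrow> real) \<Rightarrow> bool" where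
  "smooth_green_path \<iota> G \<theta> \<longleftrightarrow>
     (\<forall>t. in_V \<iota> (\<theta> t)) \<and>
     (\<forall>M. is_rmod \<iota> M \<longrightarrow> smooth_real (\<lambda>t. \<theta> t M)) \<and>
     (\<forall>t0 M. M \<in> G \<longrightarrow> nonzero_mod M \<longrightarrow> \<theta> t0 \<in> DG \<iota> G M \<longrightarrow>
         deriv (\<lambda>t. \<theta> t M) t0 > 0) \<and>
     (\<exists>T. \<forall>t>T. \<forall>M\<in>G. nonzero_mod M \<longrightarrow> \<theta> t M > 0) \<and>
     (\<exists>T'. \<forall>t<T'. \<forall>M\<in>G. nonzero_mod M \<longrightarrow> \<theta> t M < 0)"

end

theory Submission
  imports Defs "HOL-Library.Function_Algebras"
begin

definition sc :: "'k::field \<Rightarrow> (nat \<Rightarrow> 'k) \<Rightarrow> (nat \<Rightarrow> 'k)" where "sc c v = (\<lambda>i. c * v i)"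
interpretation VS: vector_space "sc :: 'k::field \<Rightarrow> (nat \<Rightarrow> 'k) \<Rightarrow> (nat \<Rightarrow> 'k)"
  by unfold_locales (auto simp: sc_def fun_eq_iff algebra_simps)

lemma vadd_eq[simp]: "vadd v w = v + w" by (simp add: vadd_def fun_eq_iff)
lemma vzero_eq[simp]: "vzero = 0" by (simp add: vzero_def fun_eq_iff)

lemma mcar_eq: "mcar M = {v. \<forall>i\<ge>fst M. v i = 0}" by (simp add: mcar_def)
lemma zero_mcar[simp]: "0 \<in> mcar M" by (simp add: mcar_def)
lemma mcar_subspace: "VS.subspace (mcar M)"
  by (auto simp: VS.subspace_def mcar_def sc_def)

definition smap :: "('k::field \<Rightarrow> 'l::ring_1) \<Rightarrow> ('k, 'l) rmod \<Rightarrow> (nat \<Rightarrow> 'k) set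
     \<Rightarrow> (nat \<Rightarrow> 'k) set \<Rightarrow> ('k, 'l) rmod \<Rightarrow> ((nat \<Rightarrow> 'k) \<Rightarrow> (nat \<Rightarrow> 'k)) \<Rightarrow> bool" where
  "smap \<iota> M B A N f \<longleftrightarrow> is_rmod \<iota> N \<and> f ` B = mcar N \<and>
          (\<forall>v\<in>B. \<forall>w\<in>B. f (v + w) = f v + f w) \<and>
          (\<forall>l. \<forall>v\<in>B. f (act M l v) = act N l (f v)) \<and>
          {v\<in>B. f v = 0} = A"

lemma sec_iso_smap: "sec_iso \<iota> M B A N \<longleftrightarrow> (\<exists>f. smap \<iota> M B A N f)"
  by (simp add: sec_iso_def smap_def)

lemma submod_alt: "is_submod M U \<longleftrightarrow> U \<subseteq> mcar M \<and> 0 \<in> U \<and>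
     (\<forall>u\<in>U. \<forall>w\<in>U. u + w \<in> U) \<and> (\<forall>l. \<forall>u\<in>U. act M l u \<in> U)"
  by (simp add: is_submod_def)

locale rmod =
  fixes \<iota> :: "'k::field \<Rightarrow> 'l::ring_1" and M :: "('k, 'l) rmod"
  assumes rm: "is_rmod \<iota> M"
begin

lemma act_closed: "v \<in> mcar M \<Longrightarrow> act M l v \<in> mcar M"
  using rm by (auto simp: is_rmod_def)
lemma act_add: "v \<in> mcar M \<Longrightarrow> w \<in> mcar M \<Longrightarrow> act M l (v + w) = act M l v + act M l w"
  using rm by (auto simp: is_rmod_def)
lemma act_iota: "v \<in> mcar M \<Longrightarrow> act M (\<iota> c) v = sc c v"
  using rm by (auto simp: is_rmod_def sc_def)
lemma act_mult: "v \<in> mcar M \<Longrightarrow> act M (l * l') v = act M l' (act M l v)"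
  using rm by (auto simp: is_rmod_def)
lemma act_zero[simp]: "act M l 0 = 0"
proof -
  have "act M l (0 + 0) = act M l 0 + act M l 0" by (rule act_add) auto
  then show ?thesis by simp
qed
lemma act_neg: "v \<in> mcar M \<Longrightarrow> act M l (- v) = - act M l v"
proof -
  assume v: "v \<in> mcar M"
  have m: "- v \<in> mcar M" using v VS.subspace_neg[OF mcar_subspace] by blast
  have "act M l (v + - v) = act M l v + act M l (- v)" by (rule act_add[OF v m])
  then have "act M l v + act M l (- v) = 0" by simp
  then show ?thesis by (metis add.inverse_unique)
qed
lemma act_diff: "v \<in> mcar M \<Longrightarrow> w \<in> mcar M \<Longrightarrow> act M l (v - w) = act M l v - act M l w"
proof -
  assume v: "v \<in> mcar M" and w: "w \<in> mcar M"
  have m: "- w \<in> mcar M" using w VS.subspace_neg[OF mcar_subspace] by blast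
  show ?thesis using act_add[OF v m] act_neg[OF w] by simp
qed

lemma submod_subspace: "is_submod M U \<Longrightarrow> VS.subspace U"
  unfolding VS.subspace_def submod_alt
proof (intro conjI ballI allI)
  fix c u assume "U \<subseteq> mcar M \<and> 0 \<in> U \<and> (\<forall>u\<in>U. \<forall>w\<in>U. u + w \<in> U) \<and> (\<forall>l. \<forall>u\<in>U. act M l u \<in> U)"
    and "u \<in> U"
  then show "sc c u \<in> U" using act_iota[of u c] by (metis subsetD)
qed auto

lemma submod_iff: "is_submod M U \<longleftrightarrow> U \<subseteq> mcar M \<and> VS.subspace U \<and> (\<forall>l. \<forall>u\<in>U. act M l u \<in> U)"
  using submod_subspace by (auto simp: submod_alt VS.subspace_def)

lemma submod_mcar: "is_submod M (mcar M)"
  using mcar_subspace[of M] act_closed by (auto simp: submod_iff)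
lemma submod_zero: "is_submod M {0}"
  by (auto simp: submod_iff)
lemma submod_inter: "is_submod M U \<Longrightarrow> is_submod M V \<Longrightarrow> is_submod M (U \<inter> V)"
  by (auto simp: submod_iff VS.subspace_inter)

definition ssum :: "(nat \<Rightarrow> 'k) set \<Rightarrow> (nat \<Rightarrow> 'k) set \<Rightarrow> (nat \<Rightarrow> 'k) set" where
  "ssum U V = {u + v | u v. u \<in> U \<and> v \<in> V}"

lemma submod_sum: "is_submod M U \<Longrightarrow> is_submod M V \<Longrightarrow> is_submod M (ssum U V)"
  unfolding submod_iff ssum_def
proof (intro conjI)
  assume U: "U \<subseteq> mcar M \<and> VS.subspace U \<and> (\<forall>l. \<forall>u\<in>U. act M l u \<in> U)"
     and V: "V \<subseteq> mcar M \<and> VS.subspace V \<and> (\<forall>l. \<forall>u\<in>V. act M l u \<in> V)"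
  show "{u + v |u v. u \<in> U \<and> v \<in> V} \<subseteq> mcar M"
    using U V VS.subspace_add[OF mcar_subspace] by blast
  show "VS.subspace {u + v |u v. u \<in> U \<and> v \<in> V}"
    using U V VS.subspace_sums by blast
  show "\<forall>l. \<forall>u\<in>{u + v |u v. u \<in> U \<and> v \<in> V}. act M l u \<in> {u + v |u v. u \<in> U \<and> v \<in> V}"
  proof (intro allI ballI)
    fix l x assume "x \<in> {u + v |u v. u \<in> U \<and> v \<in> V}"
    then obtain u v where "x = u + v" "u \<in> U" "v \<in> V" by blast
    then show "act M l x \<in> {u + v |u v. u \<in> U \<and> v \<in> V}"
      using U V act_add[of u v l] by blast
  qed
qed

lemma ssum_sub1: "is_submod M V \<Longrightarrow> U \<subseteq> ssum U V"
proof
  fix u assume "is_submod M V" "u \<in> U"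
  then have "u + 0 \<in> ssum U V" unfolding ssum_def submod_alt by blast
  then show "u \<in> ssum U V" by simp
qed
lemma ssum_sub2: "is_submod M U \<Longrightarrow> V \<subseteq> ssum U V"
proof
  fix u assume "is_submod M U" "u \<in> V"
  then have "0 + u \<in> ssum U V" unfolding ssum_def submod_alt by blast
  then show "u \<in> ssum U V" by simp
qed
lemma ssum_least: "is_submod M W \<Longrightarrow> U \<subseteq> W \<Longrightarrow> V \<subseteq> W \<Longrightarrow> ssum U V \<subseteq> W"
  unfolding ssum_def submod_alt by blast
lemma ssum_mem: "u \<in> U \<Longrightarrow> v \<in> V \<Longrightarrow> u + v \<in> ssum U V"
  unfolding ssum_def by blast
lemma ssumE: "x \<in> ssum U V \<Longrightarrow> (\<And>u v. u \<in> U \<Longrightarrow> v \<in> V \<Longrightarrow> x = u + v \<Longrightarrow> P) \<Longrightarrow> P"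
  unfolding ssum_def by blast

end


lemma sum_app: "(sum f A) x = (\<Sum>a\<in>A. f a x)"
  by (induction A rule: infinite_finite_induct) auto

definition ev :: "nat \<Rightarrow> nat \<Rightarrow> 'k::field" where "ev i = (\<lambda>j. if j = i then 1 else 0)"

lemma kspace_span: "{v::nat\<Rightarrow>'k::field. \<forall>i\<ge>d. v i = 0} \<subseteq> VS.span (ev ` {..<d})"
proof
  fix v :: "nat \<Rightarrow> 'k" assume v: "v \<in> {v. \<forall>i\<ge>d. v i = 0}"
  have "v = (\<Sum>i<d. sc (v i) (ev i))"
  proof
    fix j show "v j = (\<Sum>i<d. sc (v i) (ev i)) j"
    proof -
      have "(\<Sum>i<d. sc (v i) (ev i)) j = (\<Sum>i<d. if i = j then v i else 0)"
        unfolding sum_app sc_def ev_def by (rule sum.cong) auto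
      also have "... = v j" using v by (cases "j < d") auto
      finally show ?thesis by simp
    qed
  qed
  also have "... \<in> VS.span (ev ` {..<d})"
    by (intro VS.span_sum VS.span_scale VS.span_base) auto
  finally show "v \<in> VS.span (ev ` {..<d})" .
qed

lemma lin_quot:
  fixes A B :: "(nat \<Rightarrow> 'k::field) set"
  assumes A: "VS.subspace A" and B: "VS.subspace B" and AB: "A \<subseteq> B"
    and Bd: "B \<subseteq> {v. \<forall>i\<ge>d. v i = 0}"
  shows "\<exists>e f. f ` B = {v. \<forall>i\<ge>e. v i = 0} \<and> (\<forall>v\<in>B. \<forall>w\<in>B. f (v + w) = f v + f w) \<and>
     (\<forall>c. \<forall>v\<in>B. f (sc c v) = sc c (f v)) \<and> {v\<in>B. f v = 0} = A"
proof -
  obtain BA where BA: "BA \<subseteq> A" "VS.independent BA" "A \<subseteq> VS.span BA"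
    using VS.maximal_independent_subset[of A] by blast
  obtain BB where BB: "BA \<subseteq> BB" "BB \<subseteq> B" "VS.independent BB" "B \<subseteq> VS.span BB"
    using VS.maximal_independent_subset_extend[of BA B] BA AB by blast
  have spanBB: "VS.span BB = B" using BB B VS.span_subspace by blast
  have spanBA: "VS.span BA = A" using BA A VS.span_subspace by blast
  have "BB \<subseteq> VS.span (ev ` {..<d})" using BB(2) Bd kspace_span by blast
  then have finBB: "finite BB"
    using VS.independent_span_bound[of "ev ` {..<d}" BB] BB(3) by blast
  define C where "C = BB - BA"
  have finC: "finite C" using finBB C_def by simp
  define e where "e = card C"
  obtain \<phi> where phi: "bij_betw \<phi> {0..<e} C" using ex_bij_betw_nat_finite[OF finC] e_def by blast
  define R where "R = VS.representation BB"
  define f where "f v = (\<lambda>i. if i < e then R v (\<phi> i) else 0)" for v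
  have Rind: "VS.independent BB" by (rule BB(3))
  have inB: "v \<in> B \<Longrightarrow> v \<in> VS.span BB" for v using spanBB by simp
  have add: "\<forall>v\<in>B. \<forall>w\<in>B. f (v + w) = f v + f w"
  proof (intro ballI)
    fix v w assume v: "v \<in> B" and w: "w \<in> B"
    have "R (v + w) = (\<lambda>b. R v b + R w b)"
      unfolding R_def by (rule VS.representation_add[OF Rind inB[OF w] inB[OF v]])
    then show "f (v + w) = f v + f w" by (auto simp: f_def fun_eq_iff)
  qed
  have scale: "\<forall>c. \<forall>v\<in>B. f (sc c v) = sc c (f v)"
  proof (intro allI ballI)
    fix c v assume v: "v \<in> B"
    have "R (sc c v) = (\<lambda>b. c * R v b)"
      unfolding R_def by (rule VS.representation_scale[OF Rind inB[OF v]])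
    then show "f (sc c v) = sc c (f v)" by (auto simp: f_def fun_eq_iff sc_def)
  qed
  have ker: "{v\<in>B. f v = 0} = A"
  proof
    show "{v\<in>B. f v = 0} \<subseteq> A"
    proof clarify
      fix v assume v: "v \<in> B" and fv: "f v = 0"
      have zc: "R v c = 0" if c: "c \<in> C" for c
      proof -
        obtain i where i: "i \<in> {0..<e}" "c = \<phi> i" using phi c by (auto simp: bij_betw_def)
        have "f v i = 0" using fv by simp
        then show ?thesis using i by (simp add: f_def)
      qed
      have sub: "{b. R v b \<noteq> 0} \<subseteq> BA"
      proof
        fix b assume "b \<in> {b. R v b \<noteq> 0}"
        then have "R v b \<noteq> 0" by simp
        then have "b \<in> BB" unfolding R_def by (rule VS.representation_ne_zero)
        with zc \<open>R v b \<noteq> 0\<close> show "b \<in> BA" unfolding C_def by blast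
      qed
      have "v = (\<Sum>b | R v b \<noteq> 0. sc (R v b) b)"
        unfolding R_def by (rule VS.sum_nonzero_representation_eq[OF Rind inB[OF v], symmetric])
      also have "... \<in> VS.span BA"
        using sub by (intro VS.span_sum VS.span_scale VS.span_base) blast
      finally show "v \<in> A" using spanBA by simp
    qed
    show "A \<subseteq> {v\<in>B. f v = 0}"
    proof
      fix a assume a: "a \<in> A"
      have aBA: "a \<in> VS.span BA" using a spanBA by simp
      have "R a = VS.representation BA a"
        unfolding R_def by (rule VS.representation_extend[OF Rind aBA BB(1)])
      moreover have "VS.representation BA a c = 0" if "c \<in> C" for c
        using that VS.representation_ne_zero[of BA a c] C_def by blast
      moreover have "\<phi> i \<in> C" if "i < e" for i using phi that by (auto simp: bij_betw_def)
      ultimately have "f a = 0" by (auto simp: f_def fun_eq_iff)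
      then show "a \<in> {v\<in>B. f v = 0}" using a AB by blast
    qed
  qed
  have img: "f ` B = {v. \<forall>i\<ge>e. v i = 0}"
  proof
    show "f ` B \<subseteq> {v. \<forall>i\<ge>e. v i = 0}" by (auto simp: f_def)
    show "{v. \<forall>i\<ge>e. v i = 0} \<subseteq> f ` B"
    proof
      fix w :: "nat \<Rightarrow> 'k" assume w: "w \<in> {v. \<forall>i\<ge>e. v i = 0}"
      define v where "v = (\<Sum>i\<in>{0..<e}. sc (w i) (\<phi> i))"
      have phiC: "\<phi> i \<in> C" if "i \<in> {0..<e}" for i using phi that by (auto simp: bij_betw_def)
      have phiBB: "\<phi> i \<in> BB" if "i \<in> {0..<e}" for i using phiC[OF that] C_def by blast
      have vB: "v \<in> B" unfolding v_def spanBB[symmetric]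
        using phiBB by (intro VS.span_sum VS.span_scale VS.span_base) blast
      have "R v = (\<lambda>b. \<Sum>i\<in>{0..<e}. R (sc (w i) (\<phi> i)) b)"
        unfolding R_def v_def
        by (rule VS.representation_sum[OF Rind]) (intro VS.span_scale VS.span_base phiBB)
      also have "... = (\<lambda>b. \<Sum>i\<in>{0..<e}. w i * (if b = \<phi> i then 1 else 0))"
        unfolding R_def
        by (intro ext sum.cong refl)
          (simp add: VS.representation_scale[OF Rind VS.span_base[OF phiBB]]
            VS.representation_basis[OF Rind phiBB])
      finally have Rv: "R v = (\<lambda>b. \<Sum>i\<in>{0..<e}. w i * (if b = \<phi> i then 1 else 0))" .
      have "f v = w"
      proof
        fix j show "f v j = w j"
        proof (cases "j < e")
          case True
          have inj: "\<phi> j = \<phi> i \<longleftrightarrow> i = j" if "i \<in> {0..<e}" for i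
            using phi that True by (auto simp: bij_betw_def inj_on_def)
          have "f v j = (\<Sum>i\<in>{0..<e}. w i * (if \<phi> j = \<phi> i then 1 else 0))"
            using True by (simp add: f_def Rv)
          also have "... = (\<Sum>i\<in>{0..<e}. if i = j then w i else 0)"
            by (intro sum.cong refl) (simp add: inj)
          also have "... = w j" using True by simp
          finally show ?thesis .
        next
          case False then show ?thesis using w by (simp add: f_def)
        qed
      qed
      then show "w \<in> f ` B" using vB by blast
    qed
  qed
  show ?thesis using img add scale ker by blast
qed


lemma dim_strict:
  fixes A A' :: "(nat \<Rightarrow> 'k::field) set"
  assumes A: "VS.subspace A" and A': "VS.subspace A'" and AA: "A \<subset> A'"
    and Bd: "A' \<subseteq> {v. \<forall>i\<ge>d. v i = 0}"
  shows "VS.dim A < VS.dim A'" "VS.dim A' \<le> d"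
proof -
  obtain BA where BA: "BA \<subseteq> A" "VS.independent BA" "A \<subseteq> VS.span BA"
    using VS.maximal_independent_subset[of A] by blast
  obtain BB where BB: "BA \<subseteq> BB" "BB \<subseteq> A'" "VS.independent BB" "A' \<subseteq> VS.span BB"
    using VS.maximal_independent_subset_extend[of BA A'] BA AA by blast
  have spanBA: "VS.span BA = A" using BA A VS.span_subspace by blast
  have sp: "A' \<subseteq> VS.span (ev ` {..<d})" using Bd kspace_span by blast
  then have "BB \<subseteq> VS.span (ev ` {..<d})" using BB(2) by blast
  then have finBB: "finite BB"
    using VS.independent_span_bound[of "ev ` {..<d}" BB] BB(3) by blast
  have "BA \<noteq> BB"
  proof
    assume "BA = BB"
    then have "A' \<subseteq> A" using BB(4) spanBA by simp
    then show False using AA by blast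
  qed
  then have "card BA < card BB" using finBB BB(1) by (meson psubsetI psubset_card_mono)
  moreover have "card BA = VS.dim A" using VS.basis_card_eq_dim BA by blast
  moreover have "card BB = VS.dim A'" using VS.basis_card_eq_dim BB by blast
  ultimately show "VS.dim A < VS.dim A'" by simp
  have "VS.dim A' \<le> card (ev ` {..<d} :: (nat \<Rightarrow> 'k) set)" using VS.dim_le_card[OF sp] by simp
  also have "... \<le> d" using card_image_le[of "{..<d}" ev] by simp
  finally show "VS.dim A' \<le> d" .
qed


context rmod begin

lemma quot_exists:
  assumes A: "is_submod M A" and B: "is_submod M B" and AB: "A \<subseteq> B"
  shows "\<exists>N f. smap \<iota> M B A N f"
proof -
  have BM: "B \<subseteq> mcar M" using B by (simp add: submod_iff)
  have AS: "VS.subspace A" and BS: "VS.subspace B" using A B submod_subspace by auto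
  obtain e f where fB: "f ` B = {v. \<forall>i\<ge>e. v i = 0}"
    and fadd: "\<forall>v\<in>B. \<forall>w\<in>B. f (v + w) = f v + f w"
    and fsc: "\<forall>c. \<forall>v\<in>B. f (sc c v) = sc c (f v)" and fker: "{v\<in>B. f v = 0} = A"
    using lin_quot[OF AS BS AB, of "fst M"] BM by (auto simp: mcar_def)
  have fdiff: "f (v - w) = f v - f w" if "v \<in> B" "w \<in> B" for v w
  proof -
    have "v - w \<in> B" using that VS.subspace_diff[OF BS] by blast
    then have "f ((v - w) + w) = f (v - w) + f w" using fadd that by blast
    then show ?thesis by simp
  qed
  have actB: "act M l v \<in> B" if "v \<in> B" for l v using B that by (simp add: submod_iff)
  have key: "f (act M l v) = f (act M l v')" if v: "v \<in> B" "v' \<in> B" "f v = f v'" for l v v'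
  proof -
    have "f (v - v') = 0" using fdiff v by simp
    moreover have "v - v' \<in> B" using v VS.subspace_diff[OF BS] by blast
    ultimately have "v - v' \<in> A" using fker by blast
    then have "act M l (v - v') \<in> A" using A by (simp add: submod_iff)
    moreover have "act M l (v - v') = act M l v - act M l v'" using act_diff v BM by blast
    ultimately have "act M l v - act M l v' \<in> A" by simp
    then have "f (act M l v - act M l v') = 0" using fker by blast
    then show ?thesis using fdiff actB v by simp
  qed
  define g where "g w = (SOME v. v \<in> B \<and> f v = w)" for w
  have g: "g w \<in> B \<and> f (g w) = w" if "w \<in> f ` B" for w
  proof -
    have "\<exists>v. v \<in> B \<and> f v = w" using that by blast
    then show ?thesis unfolding g_def by (rule someI_ex)
  qed
  define N :: "('k, 'l) rmod" where "N = (e, \<lambda>l w. f (act M l (g w)))"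
  have mN: "mcar N = f ` B" using fB by (simp add: N_def mcar_def)
  have actN: "act N l w = f (act M l (g w))" for l w by (simp add: N_def act_def)
  have compat: "f (act M l v) = act N l (f v)" if "v \<in> B" for l v
    using key[of v "g (f v)" l] g[of "f v"] that by (simp add: actN)
  have rN: "is_rmod \<iota> N"
    unfolding is_rmod_def vadd_eq
  proof (intro conjI allI ballI)
    fix l w assume w: "w \<in> mcar N"
    then show "act N l w \<in> mcar N" using g actB mN actN by auto
  next
    fix l w w' assume w: "w \<in> mcar N" and w': "w' \<in> mcar N"
    obtain v v' where v: "v \<in> B" "w = f v" and v': "v' \<in> B" "w' = f v'" using w w' mN by auto
    have vv: "v + v' \<in> B" using v v' VS.subspace_add[OF BS] by blast
    have "act N l (w + w') = act N l (f (v + v'))" using fadd v v' by simp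
    also have "... = f (act M l (v + v'))" using compat vv by simp
    also have "... = f (act M l v + act M l v')" using act_add[of v v' l] v v' BM by (simp add: subsetD)
    also have "... = f (act M l v) + f (act M l v')" using fadd actB v v' by blast
    also have "... = act N l w + act N l w'" using compat v v' by simp
    finally show "act N l (w + w') = act N l w + act N l w'" .
  next
    fix l l' w assume w: "w \<in> mcar N"
    obtain v where v: "v \<in> B" "w = f v" using w mN by auto
    have "act M (l + l') v = act M l v + act M l' v" using rm v BM by (auto simp: is_rmod_def)
    then have "f (act M (l + l') v) = f (act M l v) + f (act M l' v)" using fadd actB v by simp
    then show "act N (l + l') w = act N l w + act N l' w"
      using compat v actB by simp
  next
    fix l l' w assume w: "w \<in> mcar N"
    obtain v where v: "v \<in> B" "w = f v" using w mN by auto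
    have "act N (l * l') w = f (act M (l * l') v)" using compat v by simp
    also have "... = f (act M l' (act M l v))" using act_mult[of v l l'] v BM by (simp add: subsetD)
    also have "... = act N l' (f (act M l v))" using compat actB v by blast
    also have "... = act N l' (act N l w)" using compat v by simp
    finally show "act N (l * l') w = act N l' (act N l w)" .
  next
    fix w assume w: "w \<in> mcar N"
    obtain v where v: "v \<in> B" "w = f v" using w mN by auto
    have "act M 1 v = v" using rm v BM by (auto simp: is_rmod_def)
    then show "act N 1 w = w" using compat v by metis
  next
    fix c w assume w: "w \<in> mcar N"
    obtain v where v: "v \<in> B" "w = f v" using w mN by auto
    have "act N (\<iota> c) w = f (act M (\<iota> c) v)" using compat v by simp
    also have "... = f (sc c v)" using act_iota[of v c] v BM by (simp add: subsetD)
    finally have "act N (\<iota> c) w = f (sc c v)" .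
    then show "act N (\<iota> c) w = (\<lambda>i. c * w i)" using fsc v by (simp add: sc_def)
  qed
  have "smap \<iota> M B A N f"
    unfolding smap_def using rN mN fadd compat fker by auto
  then show ?thesis by blast
qed

end


lemma inV_add: "in_V \<iota> \<theta> \<Longrightarrow> is_rmod \<iota> M \<Longrightarrow> is_submod M U \<Longrightarrow> sec_iso \<iota> M U {vzero} X
   \<Longrightarrow> sec_iso \<iota> M (mcar M) U Y \<Longrightarrow> \<theta> M = \<theta> X + \<theta> Y"
  unfolding in_V_def by blast
lemma inV_iso: "in_V \<iota> \<theta> \<Longrightarrow> is_rmod \<iota> M \<Longrightarrow> mod_iso \<iota> M N \<Longrightarrow> \<theta> M = \<theta> N"
  unfolding in_V_def by blast

lemma smap_rmod: "smap \<iota> M B A N f \<Longrightarrow> is_rmod \<iota> N" by (simp add: smap_def)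
lemma smap_img: "smap \<iota> M B A N f \<Longrightarrow> f ` B = mcar N" by (simp add: smap_def)
lemma smap_add: "smap \<iota> M B A N f \<Longrightarrow> v \<in> B \<Longrightarrow> w \<in> B \<Longrightarrow> f (v + w) = f v + f w"
  by (simp add: smap_def)
lemma smap_act: "smap \<iota> M B A N f \<Longrightarrow> v \<in> B \<Longrightarrow> f (act M l v) = act N l (f v)"
  by (simp add: smap_def)
lemma smap_ker: "smap \<iota> M B A N f \<Longrightarrow> {v\<in>B. f v = 0} = A" by (simp add: smap_def)
lemma smap_in: "smap \<iota> M B A N f \<Longrightarrow> v \<in> B \<Longrightarrow> f v \<in> mcar N"
  by (auto simp: smap_def)
lemma smap_AB: "smap \<iota> M B A N f \<Longrightarrow> A \<subseteq> B"
  by (auto simp: smap_def)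

lemma smap_id: "is_rmod \<iota> M \<Longrightarrow> smap \<iota> M (mcar M) {0} M id"
  using rmod.act_closed by (auto simp: smap_def)

lemma smap_id_zero: "is_rmod \<iota> M \<Longrightarrow> mcar M = {0} \<Longrightarrow> smap \<iota> M (mcar M) (mcar M) M id"
  by (auto simp: smap_def)

context rmod begin

lemma smap_0:
  assumes f: "smap \<iota> M B A N f" and B: "is_submod M B"
  shows "f 0 = 0"
proof -
  have "0 \<in> B" using B by (simp add: submod_iff VS.subspace_0)
  then have "f (0 + 0) = f 0 + f 0" using smap_add[OF f] by blast
  then show ?thesis by simp
qed

lemma smap_diff:
  assumes f: "smap \<iota> M B A N f" and B: "is_submod M B" and v: "v \<in> B" and w: "w \<in> B"
  shows "f (v - w) = f v - f w"
proof -
  have BS: "VS.subspace B" using B submod_subspace by blast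
  have "v - w \<in> B" using v w VS.subspace_diff[OF BS] by blast
  then have "f ((v - w) + w) = f (v - w) + f w" using smap_add[OF f] w by blast
  then show ?thesis by simp
qed

lemma smap_eq_iff:
  assumes f: "smap \<iota> M B A N f" and B: "is_submod M B" and v: "v \<in> B" and w: "w \<in> B"
  shows "f v = f w \<longleftrightarrow> v - w \<in> A"
proof -
  have BS: "VS.subspace B" using B submod_subspace by blast
  have "v - w \<in> B" using v w VS.subspace_diff[OF BS] by blast
  then show ?thesis using smap_diff[OF f B v w] smap_ker[OF f] by auto
qed

lemma smap_ker_submod:
  assumes f: "smap \<iota> M B A N f" and B: "is_submod M B"
  shows "is_submod M A"
  unfolding submod_alt
proof (intro conjI ballI allI)
  have AB: "A \<subseteq> B" using smap_AB[OF f] .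
  show "A \<subseteq> mcar M" using AB B by (auto simp: submod_alt)
  have "0 \<in> B" using B by (simp add: submod_alt)
  then show "0 \<in> A" using smap_0[OF f B] smap_ker[OF f] by blast
  fix u w assume u: "u \<in> A" and w: "w \<in> A"
  have "u \<in> B" "w \<in> B" "f u = 0" "f w = 0" using u w smap_ker[OF f] by auto
  then show "u + w \<in> A" using smap_add[OF f] B smap_ker[OF f] by (auto simp: submod_alt)
next
  fix l u assume u: "u \<in> A"
  have "u \<in> B" "f u = 0" using u smap_ker[OF f] by auto
  moreover have "act N l 0 = 0" using rmod.act_zero[OF rmod.intro[OF smap_rmod[OF f]]] .
  ultimately show "act M l u \<in> A" using smap_act[OF f] B smap_ker[OF f] by (auto simp: submod_alt)
qed

lemma smap_img_submod:
  assumes f: "smap \<iota> M C A0 N f" and C: "is_submod M C" and D: "is_submod M D" and DC: "D \<subseteq> C"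
  shows "is_submod N (f ` D)"
  unfolding submod_alt
proof (intro conjI ballI allI)
  show "f ` D \<subseteq> mcar N" using smap_img[OF f] DC by blast
  have "0 \<in> D" using D by (simp add: submod_alt)
  then show "0 \<in> f ` D" using smap_0[OF f C] by force
  fix u w assume "u \<in> f ` D" "w \<in> f ` D"
  then obtain a b where "a \<in> D" "b \<in> D" "u = f a" "w = f b" by blast
  moreover have "a + b \<in> D" using D \<open>a \<in> D\<close> \<open>b \<in> D\<close> by (simp add: submod_alt)
  ultimately show "u + w \<in> f ` D" using smap_add[OF f] DC by (metis image_eqI subsetD)
next
  fix l u assume "u \<in> f ` D"
  then obtain a where a: "a \<in> D" "u = f a" by blast
  moreover have "act M l a \<in> D" using D a by (simp add: submod_alt)
  ultimately show "act N l u \<in> f ` D" using smap_act[OF f] DC by (metis image_eqI subsetD)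
qed

lemma smap_img_ker:
  assumes f: "smap \<iota> M C A0 N f" and C: "is_submod M C"
  shows "f ` A0 = {0}"
proof -
  have "0 \<in> A0" using smap_ker_submod[OF f C] by (simp add: submod_alt)
  then show ?thesis using smap_ker[OF f] by auto
qed

lemma smap_unique:
  assumes f1: "smap \<iota> M B A N1 f1" and f2: "smap \<iota> M B A N2 f2" and B: "is_submod M B"
  shows "mod_iso \<iota> N1 N2"
proof -
  define g where "g w = f2 (SOME v. v \<in> B \<and> f1 v = w)" for w
  have gc: "g (f1 v) = f2 v" if v: "v \<in> B" for v
  proof -
    have "\<exists>v'. v' \<in> B \<and> f1 v' = f1 v" using v by blast
    then have s: "(SOME v'. v' \<in> B \<and> f1 v' = f1 v) \<in> B \<and> f1 (SOME v'. v' \<in> B \<and> f1 v' = f1 v) = f1 v"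
      by (rule someI_ex)
    then show ?thesis unfolding g_def using smap_eq_iff[OF f1 B] smap_eq_iff[OF f2 B] v by blast
  qed
  have "smap \<iota> N1 (mcar N1) {0} N2 g"
    unfolding smap_def
  proof (intro conjI ballI allI)
    show "is_rmod \<iota> N2" using smap_rmod[OF f2] .
    show "g ` mcar N1 = mcar N2"
      unfolding smap_img[OF f1, symmetric] smap_img[OF f2, symmetric] image_image using gc by auto
  next
    fix v w assume "v \<in> mcar N1" "w \<in> mcar N1"
    then obtain a b where ab: "a \<in> B" "b \<in> B" "v = f1 a" "w = f1 b" using smap_img[OF f1] by blast
    have "a + b \<in> B" using B ab by (simp add: submod_alt)
    then show "g (v + w) = g v + g w"
      using ab gc smap_add[OF f1] smap_add[OF f2] by metis
  next
    fix l v assume "v \<in> mcar N1"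
    then obtain a where a: "a \<in> B" "v = f1 a" using smap_img[OF f1] by blast
    have "act M l a \<in> B" using B a by (simp add: submod_alt)
    then show "g (act N1 l v) = act N2 l (g v)"
      using a gc smap_act[OF f1] smap_act[OF f2] by metis
  next
    show "{v \<in> mcar N1. g v = 0} = {0}"
    proof
      show "{v \<in> mcar N1. g v = 0} \<subseteq> {0}"
      proof clarify
        fix v assume "v \<in> mcar N1" "g v = 0"
        then obtain a where a: "a \<in> B" "v = f1 a" using smap_img[OF f1] by blast
        then have "f2 a = 0" using gc \<open>g v = 0\<close> by simp
        then have "a \<in> A" using smap_ker[OF f2] a by blast
        then show "v = 0" using smap_ker[OF f1] a by blast
      qed
      have "0 \<in> B" using B by (simp add: submod_alt)
      then show "{0} \<subseteq> {v \<in> mcar N1. g v = 0}"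
        using gc smap_0[OF f1 B] smap_0[OF f2 B] smap_in[OF f1] by force
    qed
  qed
  then show ?thesis unfolding mod_iso_def sec_iso_smap by auto
qed

lemma theta_smap:
  assumes V: "in_V \<iota> \<theta>" and f: "smap \<iota> M B A N f" and B: "is_submod M B"
  shows "theta_sec \<iota> \<theta> M B A = \<theta> N"
proof -
  have "\<exists>N. sec_iso \<iota> M B A N" using f sec_iso_smap by blast
  then have "sec_iso \<iota> M B A (SOME N. sec_iso \<iota> M B A N)" by (rule someI_ex)
  then obtain g where g: "smap \<iota> M B A (SOME N. sec_iso \<iota> M B A N) g" using sec_iso_smap by blast
  have "mod_iso \<iota> (SOME N. sec_iso \<iota> M B A N) N" using smap_unique[OF g f B] .
  then show ?thesis using inV_iso[OF V smap_rmod[OF g]] unfolding theta_sec_def by blast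
qed

lemma smap_pull:
  assumes f: "smap \<iota> M C A0 N f" and C: "is_submod M C"
    and B': "is_submod M B'" and D: "is_submod M D"
    and sub: "A0 \<subseteq> B'" "B' \<subseteq> D" "D \<subseteq> C"
    and h: "smap \<iota> N (f ` D) (f ` B') N' h"
  shows "smap \<iota> M D B' N' (h \<circ> f)"
  unfolding smap_def
proof (intro conjI ballI allI)
  show "is_rmod \<iota> N'" using smap_rmod[OF h] .
  show "(h \<circ> f) ` D = mcar N'" using smap_img[OF h] by (simp add: image_comp)
next
  fix v w assume v: "v \<in> D" and w: "w \<in> D"
  have "v \<in> C" "w \<in> C" using v w sub by auto
  then have "f (v + w) = f v + f w" using smap_add[OF f] by blast
  then show "(h \<circ> f) (v + w) = (h \<circ> f) v + (h \<circ> f) w" using smap_add[OF h] v w by simp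
next
  fix l v assume v: "v \<in> D"
  have "v \<in> C" using v sub by auto
  then have "f (act M l v) = act N l (f v)" using smap_act[OF f] by blast
  then show "(h \<circ> f) (act M l v) = act N' l ((h \<circ> f) v)" using smap_act[OF h] v by simp
next
  show "{v \<in> D. (h \<circ> f) v = 0} = B'"
  proof
    show "B' \<subseteq> {v \<in> D. (h \<circ> f) v = 0}"
      using smap_ker[OF h] sub by auto
    show "{v \<in> D. (h \<circ> f) v = 0} \<subseteq> B'"
    proof clarify
      fix v assume v: "v \<in> D" "(h \<circ> f) v = 0"
      then have "f v \<in> f ` B'" using smap_ker[OF h] by auto
      then obtain b where b: "b \<in> B'" "f v = f b" by auto
      have "v \<in> C" "b \<in> C" using v b sub by auto
      then have "v - b \<in> A0" using smap_eq_iff[OF f C] b by blast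
      then have "v - b \<in> B'" using sub by blast
      then have "(v - b) + b \<in> B'" using b B' unfolding submod_alt by blast
      then show "v \<in> B'" by simp
    qed
  qed
qed

lemma smap_restrict:
  assumes f: "smap \<iota> M B A N f" and X: "X \<subseteq> B" and img: "f ` X = f ` B"
  shows "smap \<iota> M X (X \<inter> A) N f"
proof -
  have "\<forall>v\<in>X. \<forall>w\<in>X. f (v + w) = f v + f w" using smap_add[OF f] X by blast
  moreover have "\<forall>l. \<forall>v\<in>X. f (act M l v) = act N l (f v)" using smap_act[OF f] X by blast
  moreover have "{v\<in>X. f v = 0} = X \<inter> A" using smap_ker[OF f] X by blast
  ultimately show ?thesis using smap_rmod[OF f] smap_img[OF f] img unfolding smap_def by simp
qed

end

lemma theta_zero:
  assumes V: "in_V \<iota> \<theta>" and N: "is_rmod \<iota> N" and z: "mcar N = {0}"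
  shows "\<theta> N = 0"
proof -
  have "is_submod N (mcar N)" using rmod.submod_mcar[OF rmod.intro[OF N]] .
  moreover have "sec_iso \<iota> N (mcar N) {vzero} N" using smap_id[OF N] unfolding sec_iso_smap vzero_eq by blast
  moreover have "sec_iso \<iota> N (mcar N) (mcar N) N" using smap_id_zero[OF N z] unfolding sec_iso_smap by blast
  ultimately have "\<theta> N = \<theta> N + \<theta> N" using inV_add[OF V N] by blast
  then show ?thesis by simp
qed

context rmod begin

lemma theta_same:
  assumes V: "in_V \<iota> \<theta>" and B: "is_submod M B"
  shows "theta_sec \<iota> \<theta> M B B = 0"
proof -
  obtain N f where f: "smap \<iota> M B B N f" using quot_exists[OF B B] by blast
  have z: "\<forall>v\<in>B. f v = 0" using smap_ker[OF f] by blast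
  have "0 \<in> B" using B by (simp add: submod_alt)
  then have "mcar N = {0}" using smap_img[OF f] z by force
  then show ?thesis using theta_smap[OF V f B] theta_zero[OF V smap_rmod[OF f]] by simp
qed

lemma theta_add:
  assumes V: "in_V \<iota> \<theta>" and A: "is_submod M A" and B: "is_submod M B" and C: "is_submod M C"
    and AB: "A \<subseteq> B" and BC: "B \<subseteq> C"
  shows "theta_sec \<iota> \<theta> M C A = theta_sec \<iota> \<theta> M C B + theta_sec \<iota> \<theta> M B A"
proof -
  obtain Y f where f: "smap \<iota> M C A Y f" using quot_exists[OF A C] AB BC by blast
  interpret Y: rmod \<iota> Y using smap_rmod[OF f] by (rule rmod.intro)
  have U: "is_submod Y (f ` B)" using smap_img_submod[OF f C B BC] .
  have fA: "f ` A = {0}" using smap_img_ker[OF f C] .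
  obtain X h where h: "smap \<iota> Y (f ` B) {0} X h" using Y.quot_exists[OF Y.submod_zero U] U
    by (auto simp: submod_alt)
  obtain X' h' where h': "smap \<iota> Y (mcar Y) (f ` B) X' h'"
    using Y.quot_exists[OF U Y.submod_mcar] U by (auto simp: submod_alt)
  have p1: "smap \<iota> M B A X (h \<circ> f)"
    using smap_pull[OF f C A B] AB BC h fA by auto
  have p2: "smap \<iota> M C B X' (h' \<circ> f)"
    using smap_pull[OF f C B C] AB BC h' smap_img[OF f] by auto
  have "\<theta> Y = \<theta> X + \<theta> X'"
    using inV_add[OF V Y.rm U] h h' unfolding sec_iso_smap vzero_eq by blast
  then show ?thesis
    using theta_smap[OF V f C] theta_smap[OF V p1 B] theta_smap[OF V p2 C] by simp
qed

end


locale tcm = rmod \<iota> M for \<iota> :: "'k::field \<Rightarrow> 'l::ring_1" and M +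
  fixes G :: "('k, 'l) rmod set"
  assumes tc: "torsion_class \<iota> G"
begin

lemma G_iso: "N \<in> G \<Longrightarrow> mod_iso \<iota> N N' \<Longrightarrow> N' \<in> G"
  using tc unfolding torsion_class_def by blast
lemma G_quot: "N \<in> G \<Longrightarrow> is_submod N U \<Longrightarrow> sec_iso \<iota> N (mcar N) U N' \<Longrightarrow> N' \<in> G"
  using tc unfolding torsion_class_def by blast
lemma G_ext: "is_rmod \<iota> N \<Longrightarrow> is_submod N U \<Longrightarrow> X \<in> G \<Longrightarrow> Y \<in> G \<Longrightarrow>
         sec_iso \<iota> N U {vzero} X \<Longrightarrow> sec_iso \<iota> N (mcar N) U Y \<Longrightarrow> N \<in> G"
  using tc unfolding torsion_class_def by blast
lemma G_rmod: "N \<in> G \<Longrightarrow> is_rmod \<iota> N"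
  using tc unfolding torsion_class_def by blast

lemma sq_in_smap:
  assumes "sq_in \<iota> G M B A" and f: "smap \<iota> M B A N f" and B: "is_submod M B"
  shows "N \<in> G"
proof -
  obtain N0 where N0: "N0 \<in> G" "sec_iso \<iota> M B A N0" using assms(1) unfolding sq_in_def by blast
  then obtain g where g: "smap \<iota> M B A N0 g" using sec_iso_smap by blast
  show ?thesis using G_iso[OF N0(1) smap_unique[OF g f B]] .
qed

lemma sq_inI: "smap \<iota> M B A N f \<Longrightarrow> N \<in> G \<Longrightarrow> sq_in \<iota> G M B A"
  unfolding sq_in_def sec_iso_smap by blast

lemma sq_in_iff:
  assumes f: "smap \<iota> M B A N f" and B: "is_submod M B"
  shows "sq_in \<iota> G M B A \<longleftrightarrow> N \<in> G"
  using sq_in_smap[OF _ f B] sq_inI[OF f] by blast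

lemma G_self: "M \<in> G \<Longrightarrow> sq_in \<iota> G M (mcar M) {0}"
  using sq_inI[OF smap_id[OF rm]] by blast

lemma G1:
  assumes sq: "sq_in \<iota> G M B A0" and A0: "is_submod M A0" and A: "is_submod M A" and B: "is_submod M B"
    and sub: "A0 \<subseteq> A" "A \<subseteq> B"
  shows "sq_in \<iota> G M B A"
proof -
  obtain N f where f: "smap \<iota> M B A0 N f" using quot_exists[OF A0 B] sub by blast
  interpret N: rmod \<iota> N using smap_rmod[OF f] by (rule rmod.intro)
  have NG: "N \<in> G" using sq_in_smap[OF sq f B] .
  have U: "is_submod N (f ` A)" using smap_img_submod[OF f B A sub(2)] .
  obtain N' h where h: "smap \<iota> N (mcar N) (f ` A) N' h" using N.quot_exists[OF U N.submod_mcar] U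
    by (auto simp: submod_alt)
  have "N' \<in> G" using G_quot[OF NG U] h sec_iso_smap by blast
  moreover have "smap \<iota> M B A N' (h \<circ> f)"
    using smap_pull[OF f B A B] sub h smap_img[OF f] by auto
  ultimately show ?thesis using sq_inI by blast
qed

lemma G2:
  assumes s1: "sq_in \<iota> G M B A" and s2: "sq_in \<iota> G M A C"
    and C: "is_submod M C" and A: "is_submod M A" and B: "is_submod M B"
    and sub: "C \<subseteq> A" "A \<subseteq> B"
  shows "sq_in \<iota> G M B C"
proof -
  obtain N f where f: "smap \<iota> M B C N f" using quot_exists[OF C B] sub by blast
  interpret N: rmod \<iota> N using smap_rmod[OF f] by (rule rmod.intro)
  have U: "is_submod N (f ` A)" using smap_img_submod[OF f B A sub(2)] .
  have fC: "f ` C = {0}" using smap_img_ker[OF f B] .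
  obtain X h where h: "smap \<iota> N (f ` A) {0} X h" using N.quot_exists[OF N.submod_zero U] U
    by (auto simp: submod_alt)
  obtain Y h' where h': "smap \<iota> N (mcar N) (f ` A) Y h'"
    using N.quot_exists[OF U N.submod_mcar] U by (auto simp: submod_alt)
  have p1: "smap \<iota> M A C X (h \<circ> f)"
    using smap_pull[OF f B C A] sub h fC by auto
  have p2: "smap \<iota> M B A Y (h' \<circ> f)"
    using smap_pull[OF f B A B] sub h' smap_img[OF f] by auto
  have XG: "X \<in> G" using sq_in_smap[OF s2 p1 A] .
  have YG: "Y \<in> G" using sq_in_smap[OF s1 p2 B] .
  have "N \<in> G" using G_ext[OF N.rm U XG YG] h h' unfolding sec_iso_smap vzero_eq by blast
  then show ?thesis using sq_inI[OF f] by blast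
qed

lemma Tsq:
  assumes f: "smap \<iota> M C A0 N f" and C: "is_submod M C"
    and B': "is_submod M B'" and D: "is_submod M D"
    and sub: "A0 \<subseteq> B'" "B' \<subseteq> D" "D \<subseteq> C"
  shows "sq_in \<iota> G N (f ` D) (f ` B') \<longleftrightarrow> sq_in \<iota> G M D B'"
proof -
  interpret N: rmod \<iota> N using smap_rmod[OF f] by (rule rmod.intro)
  have UD: "is_submod N (f ` D)" using smap_img_submod[OF f C D sub(3)] .
  have UB: "is_submod N (f ` B')" using smap_img_submod[OF f C B'] sub by auto
  obtain N' h where h: "smap \<iota> N (f ` D) (f ` B') N' h"
    using N.quot_exists[OF UB UD] sub by blast
  have p: "smap \<iota> M D B' N' (h \<circ> f)" using smap_pull[OF f C B' D sub h] .
  interpret Nt: tcm \<iota> N G by (intro tcm.intro tcm_axioms.intro N.rmod_axioms tc)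
  show ?thesis using Nt.sq_in_iff[OF h UD] sq_in_iff[OF p D] by simp
qed

lemma Ttheta:
  assumes V: "in_V \<iota> \<theta>" and f: "smap \<iota> M C A0 N f" and C: "is_submod M C"
    and B': "is_submod M B'" and D: "is_submod M D"
    and sub: "A0 \<subseteq> B'" "B' \<subseteq> D" "D \<subseteq> C"
  shows "theta_sec \<iota> \<theta> N (f ` D) (f ` B') = theta_sec \<iota> \<theta> M D B'"
proof -
  interpret N: rmod \<iota> N using smap_rmod[OF f] by (rule rmod.intro)
  have UD: "is_submod N (f ` D)" using smap_img_submod[OF f C D sub(3)] .
  have UB: "is_submod N (f ` B')" using smap_img_submod[OF f C B'] sub by auto
  obtain N' h where h: "smap \<iota> N (f ` D) (f ` B') N' h"
    using N.quot_exists[OF UB UD] sub by blast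
  have p: "smap \<iota> M D B' N' (h \<circ> f)" using smap_pull[OF f C B' D sub h] .
  show ?thesis using N.theta_smap[OF V h UD] theta_smap[OF V p D] by simp
qed

lemma iso2_obj:
  assumes X: "is_submod M X" and A: "is_submod M A"
  obtains N f where "smap \<iota> M (ssum X A) A N f" "smap \<iota> M X (X \<inter> A) N f"
proof -
  have S: "is_submod M (ssum X A)" using submod_sum[OF X A] .
  obtain N f where f: "smap \<iota> M (ssum X A) A N f"
    using quot_exists[OF A S] ssum_sub2[OF X] by blast
  have XS: "X \<subseteq> ssum X A" using ssum_sub1[OF A] .
  have "f ` X = f ` ssum X A"
  proof
    show "f ` X \<subseteq> f ` ssum X A" using XS by blast
    show "f ` ssum X A \<subseteq> f ` X"
    proof
      fix w assume "w \<in> f ` ssum X A"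
      then obtain y where y: "y \<in> ssum X A" "w = f y" by blast
      then obtain x a where xa: "x \<in> X" "a \<in> A" "y = x + a" by (auto elim: ssumE)
      have "a \<in> ssum X A" using xa ssum_sub2[OF X] by blast
      then have "f y = f x + f a" using smap_add[OF f] xa XS by blast
      moreover have "f a = 0" using smap_ker[OF f] xa by blast
      ultimately show "w \<in> f ` X" using y xa by simp
    qed
  qed
  then have "smap \<iota> M X (X \<inter> A) N f" using smap_restrict[OF f XS] by blast
  then show ?thesis using that f by blast
qed

lemma iso2_sq:
  assumes X: "is_submod M X" and A: "is_submod M A"
  shows "sq_in \<iota> G M (ssum X A) A \<longleftrightarrow> sq_in \<iota> G M X (X \<inter> A)"
proof -
  obtain N f where f1: "smap \<iota> M (ssum X A) A N f" and f2: "smap \<iota> M X (X \<inter> A) N f"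
    using iso2_obj[OF X A] by blast
  show ?thesis using sq_in_iff[OF f1 submod_sum[OF X A]] sq_in_iff[OF f2 X] by simp
qed

lemma iso2_theta:
  assumes V: "in_V \<iota> \<theta>" and X: "is_submod M X" and A: "is_submod M A"
  shows "theta_sec \<iota> \<theta> M (ssum X A) A = theta_sec \<iota> \<theta> M X (X \<inter> A)"
proof -
  obtain N f where f1: "smap \<iota> M (ssum X A) A N f" and f2: "smap \<iota> M X (X \<inter> A) N f"
    using iso2_obj[OF X A] by blast
  show ?thesis using theta_smap[OF V f1 submod_sum[OF X A]] theta_smap[OF V f2 X] by simp
qed

end


context rmod begin

lemma submod_neg: "is_submod M U \<Longrightarrow> x \<in> U \<Longrightarrow> - x \<in> U"
  using submod_subspace VS.subspace_neg by blast

lemma ssum_comm: "ssum X A = ssum A X"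
  unfolding ssum_def by (metis (no_types, lifting) add.commute)

lemma ssum_ident:
  assumes X: "is_submod M X" and A: "is_submod M A" and B: "is_submod M B'"
  shows "ssum ((ssum X A) \<inter> B') X = ssum (A \<inter> ssum B' X) X"
proof
  show "ssum (ssum X A \<inter> B') X \<subseteq> ssum (A \<inter> ssum B' X) X"
  proof
    fix z assume "z \<in> ssum (ssum X A \<inter> B') X"
    then obtain y x where yx: "y \<in> ssum X A" "y \<in> B'" "x \<in> X" "z = y + x" by (auto elim: ssumE)
    then obtain x1 a where xa: "x1 \<in> X" "a \<in> A" "y = x1 + a" by (auto elim: ssumE)
    have "a = y + (- x1)" using xa by simp
    moreover have "- x1 \<in> X" using submod_neg[OF X xa(1)] .
    ultimately have aS: "a \<in> ssum B' X" using yx(2) ssum_mem by metis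
    have "x1 + x \<in> X" using X xa(1) yx(3) by (simp add: submod_alt)
    moreover have "z = a + (x1 + x)" using yx xa by (simp add: algebra_simps)
    ultimately show "z \<in> ssum (A \<inter> ssum B' X) X" using aS xa(2) ssum_mem by (metis IntI)
  qed
  show "ssum (A \<inter> ssum B' X) X \<subseteq> ssum (ssum X A \<inter> B') X"
  proof
    fix z assume "z \<in> ssum (A \<inter> ssum B' X) X"
    then obtain a x where ax: "a \<in> A" "a \<in> ssum B' X" "x \<in> X" "z = a + x" by (auto elim: ssumE)
    then obtain b x2 where bx: "b \<in> B'" "x2 \<in> X" "a = b + x2" by (auto elim: ssumE)
    have "b = (- x2) + a" using bx by simp
    moreover have "- x2 \<in> X" using submod_neg[OF X bx(2)] .
    ultimately have bS: "b \<in> ssum X A" using ax(1) ssum_mem by metis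
    have "x2 + x \<in> X" using X bx(2) ax(3) by (simp add: submod_alt)
    moreover have "z = b + (x2 + x)" using ax bx by (simp add: algebra_simps)
    ultimately show "z \<in> ssum (ssum X A \<inter> B') X" using bS bx(1) ssum_mem by (metis IntI)
  qed
qed

end

context tcm begin

lemma subobj_iff: "subobj \<iota> G M B \<longleftrightarrow> is_submod M B \<and> sq_in \<iota> G M B {0}"
  by (simp add: subobj_def)

lemma strict_iff: "strict_subobj \<iota> G M A \<longleftrightarrow> subobj \<iota> G M A \<and>
     (\<forall>B'. subobj \<iota> G M B' \<longrightarrow> sq_in \<iota> G M (A \<inter> B') {0})"
  by (simp add: strict_subobj_def)

lemma strict_subobj: "strict_subobj \<iota> G M A \<Longrightarrow> subobj \<iota> G M A"
  by (simp add: strict_iff)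

lemma strict_submod: "strict_subobj \<iota> G M A \<Longrightarrow> is_submod M A"
  by (simp add: strict_iff subobj_iff)

lemma strict_inter: "strict_subobj \<iota> G M A \<Longrightarrow> subobj \<iota> G M B \<Longrightarrow> subobj \<iota> G M (A \<inter> B)"
  using submod_inter by (auto simp: strict_iff subobj_iff)

lemma strict_mcar: "M \<in> G \<Longrightarrow> strict_subobj \<iota> G M (mcar M)"
proof -
  assume MG: "M \<in> G"
  have "subobj \<iota> G M (mcar M)" using G_self[OF MG] submod_mcar by (simp add: subobj_iff)
  moreover have "mcar M \<inter> B' = B'" if "subobj \<iota> G M B'" for B'
    using that by (auto simp: subobj_iff submod_alt)
  ultimately show ?thesis by (auto simp: strict_iff subobj_iff)
qed

lemma subobj_sum:
  assumes X: "subobj \<iota> G M X" and B: "subobj \<iota> G M B"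
  shows "subobj \<iota> G M (ssum X B)"
proof -
  have Xs: "is_submod M X" and Bs: "is_submod M B" using X B by (auto simp: subobj_iff)
  have "sq_in \<iota> G M B (B \<inter> X)"
    using G1[of B "{0}" "B \<inter> X"] B submod_zero submod_inter[OF Bs Xs] Xs Bs
    by (auto simp: subobj_iff submod_alt)
  then have s1: "sq_in \<iota> G M (ssum B X) X" using iso2_sq[OF Bs Xs] by simp
  have S: "is_submod M (ssum B X)" using submod_sum[OF Bs Xs] .
  have "sq_in \<iota> G M (ssum B X) {0}"
    using G2[OF s1 _ submod_zero Xs S] X ssum_sub2[OF Bs] by (auto simp: subobj_iff submod_alt)
  then show ?thesis using S ssum_comm by (simp add: subobj_iff)
qed

lemma strict_sum:
  assumes X: "strict_subobj \<iota> G M X" and A: "strict_subobj \<iota> G M A"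
  shows "strict_subobj \<iota> G M (ssum X A)"
proof -
  have Xs: "is_submod M X" and As: "is_submod M A" using X A strict_submod by auto
  have Ss: "subobj \<iota> G M (ssum X A)" using subobj_sum X A strict_subobj by blast
  have "sq_in \<iota> G M (ssum X A \<inter> B') {0}" if B: "subobj \<iota> G M B'" for B'
  proof -
    have Bs: "is_submod M B'" using B by (simp add: subobj_iff)
    define Y where "Y = ssum X A \<inter> B'"
    have Ys: "is_submod M Y" unfolding Y_def using submod_inter submod_sum Xs As Bs by blast
    have XB: "sq_in \<iota> G M (X \<inter> B') {0}" using X B by (simp add: strict_iff)
    have BX: "subobj \<iota> G M (ssum B' X)" using subobj_sum B X strict_subobj by blast
    have BXs: "is_submod M (ssum B' X)" using BX by (simp add: subobj_iff)
    define Z where "Z = A \<inter> ssum B' X"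
    have Zs: "is_submod M Z" unfolding Z_def using submod_inter As BXs by blast
    have "sq_in \<iota> G M Z {0}" using A BX unfolding Z_def by (simp add: strict_iff)
    then have "sq_in \<iota> G M Z (Z \<inter> X)"
      using G1[of Z "{0}" "Z \<inter> X"] submod_zero submod_inter[OF Zs Xs] Zs
      by (auto simp: submod_alt)
    then have "sq_in \<iota> G M (ssum Z X) X" using iso2_sq[OF Zs Xs] by simp
    then have "sq_in \<iota> G M (ssum Y X) X" using ssum_ident[OF Xs As Bs] unfolding Y_def Z_def by simp
    then have "sq_in \<iota> G M Y (Y \<inter> X)" using iso2_sq[OF Ys Xs] by simp
    moreover have "Y \<inter> X = X \<inter> B'" unfolding Y_def using ssum_sub1[OF As] by blast
    ultimately have s1: "sq_in \<iota> G M Y (X \<inter> B')" by simp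
    have "sq_in \<iota> G M Y {0}"
      using G2[OF s1 XB submod_zero submod_inter[OF Xs Bs] Ys] submod_inter[OF Xs Bs]
        ssum_sub1[OF As] unfolding Y_def by (auto simp: submod_alt)
    then show ?thesis unfolding Y_def .
  qed
  then show ?thesis using Ss by (simp add: strict_iff)
qed

end


context tcm begin

lemma img_ssum_ker:
  assumes f: "smap \<iota> M C A0 N f" and C: "is_submod M C" and Y: "Y \<subseteq> C"
  shows "f ` ssum Y A0 = f ` Y"
proof
  have A0s: "is_submod M A0" using smap_ker_submod[OF f C] .
  have A0C: "A0 \<subseteq> C" using smap_AB[OF f] .
  show "f ` ssum Y A0 \<subseteq> f ` Y"
  proof
    fix w assume "w \<in> f ` ssum Y A0"
    then obtain y a where ya: "y \<in> Y" "a \<in> A0" "w = f (y + a)" by (auto elim: ssumE)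
    then have "w = f y + f a" using smap_add[OF f] Y A0C by blast
    moreover have "f a = 0" using smap_ker[OF f] ya by blast
    ultimately show "w \<in> f ` Y" using ya by simp
  qed
  show "f ` Y \<subseteq> f ` ssum Y A0" using ssum_sub1[OF A0s] by blast
qed

lemma pre_subobj:
  assumes f: "smap \<iota> M C A0 N f" and C: "is_submod M C" and A0G: "sq_in \<iota> G M A0 {0}"
    and Bb: "subobj \<iota> G N Bb"
  shows "is_submod M {v\<in>C. f v \<in> Bb}" "A0 \<subseteq> {v\<in>C. f v \<in> Bb}" "{v\<in>C. f v \<in> Bb} \<subseteq> C"
    "f ` {v\<in>C. f v \<in> Bb} = Bb" "subobj \<iota> G M {v\<in>C. f v \<in> Bb}"
proof -
  define P where "P = {v\<in>C. f v \<in> Bb}"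
  have A0s: "is_submod M A0" using smap_ker_submod[OF f C] .
  have A0C: "A0 \<subseteq> C" using smap_AB[OF f] .
  have Bbs: "is_submod N Bb" using Bb by (simp add: subobj_def)
  have BbN: "Bb \<subseteq> mcar N" using Bbs by (simp add: submod_alt)
  have f0: "f 0 = 0" using smap_0[OF f C] .
  have Ps: "is_submod M P"
    unfolding submod_alt P_def
  proof (intro conjI ballI allI)
    show "{v \<in> C. f v \<in> Bb} \<subseteq> mcar M" using C by (auto simp: submod_alt)
    show "0 \<in> {v \<in> C. f v \<in> Bb}" using C Bbs f0 by (simp add: submod_alt)
  next
    fix u w assume u: "u \<in> {v \<in> C. f v \<in> Bb}" and w: "w \<in> {v \<in> C. f v \<in> Bb}"
    have "f (u + w) = f u + f w" using smap_add[OF f] u w by blast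
    then show "u + w \<in> {v \<in> C. f v \<in> Bb}" using u w C Bbs by (simp add: submod_alt)
  next
    fix l u assume u: "u \<in> {v \<in> C. f v \<in> Bb}"
    have "f (act M l u) = act N l (f u)" using smap_act[OF f] u by blast
    then show "act M l u \<in> {v \<in> C. f v \<in> Bb}" using u C Bbs by (simp add: submod_alt)
  qed
  then show "is_submod M {v\<in>C. f v \<in> Bb}" unfolding P_def .
  have A0P: "A0 \<subseteq> P" unfolding P_def using A0C smap_ker[OF f] Bbs by (auto simp: submod_alt)
  then show "A0 \<subseteq> {v\<in>C. f v \<in> Bb}" unfolding P_def .
  have PC: "P \<subseteq> C" unfolding P_def by blast
  then show "{v\<in>C. f v \<in> Bb} \<subseteq> C" unfolding P_def .
  have fP: "f ` P = Bb"
  proof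
    show "f ` P \<subseteq> Bb" unfolding P_def by blast
    show "Bb \<subseteq> f ` P"
    proof
      fix w assume w: "w \<in> Bb"
      then obtain v where "v \<in> C" "w = f v" using BbN smap_img[OF f] by blast
      then show "w \<in> f ` P" using w unfolding P_def by blast
    qed
  qed
  then show "f ` {v\<in>C. f v \<in> Bb} = Bb" unfolding P_def .
  have "f ` A0 = {0}" using smap_img_ker[OF f C] .
  then have "sq_in \<iota> G M P A0" using Tsq[OF f C A0s Ps order_refl A0P PC] fP Bb by (simp add: subobj_def)
  then have "sq_in \<iota> G M P {0}" using G2[OF _ A0G submod_zero A0s Ps] A0s A0P
    by (auto simp: submod_alt)
  then show "subobj \<iota> G M {v\<in>C. f v \<in> Bb}" using Ps unfolding P_def by (simp add: subobj_iff)
qed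

lemma pre_strict:
  assumes f: "smap \<iota> M C A0 N f" and Cst: "strict_subobj \<iota> G M C" and A0st: "strict_subobj \<iota> G M A0"
    and Bb: "strict_subobj \<iota> G N Bb"
  shows "strict_subobj \<iota> G M {v\<in>C. f v \<in> Bb}"
proof -
  interpret N: tcm \<iota> N G by (intro tcm.intro tcm_axioms.intro rmod.intro smap_rmod[OF f] tc)
  define P where "P = {v\<in>C. f v \<in> Bb}"
  have C: "is_submod M C" using strict_submod[OF Cst] .
  have A0s: "is_submod M A0" using strict_submod[OF A0st] .
  have A0G: "sq_in \<iota> G M A0 {0}" using A0st by (simp add: strict_iff subobj_iff)
  have A0C: "A0 \<subseteq> C" using smap_ker[OF f] by blast
  have Bbo: "subobj \<iota> G N Bb" using N.strict_subobj[OF Bb] .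
  note pre = pre_subobj[OF f C A0G Bbo, folded P_def]
  have "sq_in \<iota> G M (P \<inter> B') {0}" if B: "subobj \<iota> G M B'" for B'
  proof -
    have Bs: "is_submod M B'" using B by (simp add: subobj_iff)
    have A0B: "sq_in \<iota> G M (A0 \<inter> B') {0}" using A0st B by (simp add: strict_iff)
    have CBs: "is_submod M (C \<inter> B')" using submod_inter[OF C Bs] .
    have "sq_in \<iota> G M (C \<inter> B') {0}" using Cst B by (simp add: strict_iff)
    then have "sq_in \<iota> G M (C \<inter> B') (C \<inter> B' \<inter> A0)"
      using G1[of "C \<inter> B'" "{0}" "C \<inter> B' \<inter> A0"] submod_zero submod_inter[OF CBs A0s] CBs
      by (auto simp: submod_alt)
    then have s1: "sq_in \<iota> G M (ssum (C \<inter> B') A0) A0" using iso2_sq[OF CBs A0s] by simp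
    have Ss: "is_submod M (ssum (C \<inter> B') A0)" using submod_sum[OF CBs A0s] .
    have SC: "ssum (C \<inter> B') A0 \<subseteq> C" using ssum_least[OF C] A0C by blast
    have A0S: "A0 \<subseteq> ssum (C \<inter> B') A0" using ssum_sub2[OF CBs] .
    have fA0: "f ` A0 = {0}" using smap_img_ker[OF f C] .
    have "sq_in \<iota> G N (f ` ssum (C \<inter> B') A0) {0}"
      using Tsq[OF f C A0s Ss order_refl A0S SC] s1 fA0 by simp
    moreover have "is_submod N (f ` ssum (C \<inter> B') A0)" using smap_img_submod[OF f C Ss SC] .
    ultimately have "subobj \<iota> G N (f ` ssum (C \<inter> B') A0)" by (simp add: subobj_def)
    then have s2: "sq_in \<iota> G N (Bb \<inter> f ` ssum (C \<inter> B') A0) {0}" using Bb by (simp add: strict_subobj_def)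
    have PBs: "is_submod M (P \<inter> B')" using submod_inter[OF pre(1) Bs] .
    have PBC: "P \<inter> B' \<subseteq> C" using pre(3) by blast
    have eq: "Bb \<inter> f ` ssum (C \<inter> B') A0 = f ` ssum (P \<inter> B') A0"
    proof -
      have "f ` ssum (C \<inter> B') A0 = f ` (C \<inter> B')" using img_ssum_ker[OF f C] by blast
      moreover have "f ` ssum (P \<inter> B') A0 = f ` (P \<inter> B')" using img_ssum_ker[OF f C PBC] .
      moreover have "Bb \<inter> f ` (C \<inter> B') = f ` (P \<inter> B')" unfolding P_def by blast
      ultimately show ?thesis by simp
    qed
    have S2s: "is_submod M (ssum (P \<inter> B') A0)" using submod_sum[OF PBs A0s] .
    have S2C: "ssum (P \<inter> B') A0 \<subseteq> C" using ssum_least[OF C] A0C PBC by blast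
    have A0S2: "A0 \<subseteq> ssum (P \<inter> B') A0" using ssum_sub2[OF PBs] .
    have "sq_in \<iota> G M (ssum (P \<inter> B') A0) A0"
      using Tsq[OF f C A0s S2s order_refl A0S2 S2C] s2 eq fA0 by simp
    then have "sq_in \<iota> G M (P \<inter> B') (P \<inter> B' \<inter> A0)" using iso2_sq[OF PBs A0s] by simp
    moreover have "P \<inter> B' \<inter> A0 = A0 \<inter> B'" using pre(2) by blast
    ultimately have s3: "sq_in \<iota> G M (P \<inter> B') (A0 \<inter> B')" by simp
    show ?thesis using G2[OF s3 A0B submod_zero submod_inter[OF A0s Bs] PBs] pre(2)
        submod_inter[OF A0s Bs] by (auto simp: submod_alt)
  qed
  then show ?thesis using pre(5) unfolding P_def by (simp add: strict_iff)
qed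

lemma img_strict:
  assumes f: "smap \<iota> M C A0 N f" and Cst: "strict_subobj \<iota> G M C" and A0st: "strict_subobj \<iota> G M A0"
    and Ast: "strict_subobj \<iota> G M A" and A0A: "A0 \<subseteq> A"
  shows "strict_subobj \<iota> G N (f ` (C \<inter> A))"
proof -
  interpret N: tcm \<iota> N G by (intro tcm.intro tcm_axioms.intro rmod.intro smap_rmod[OF f] tc)
  have C: "is_submod M C" using strict_submod[OF Cst] .
  have A0s: "is_submod M A0" using strict_submod[OF A0st] .
  have As: "is_submod M A" using strict_submod[OF Ast] .
  have A0G: "sq_in \<iota> G M A0 {0}" using A0st by (simp add: strict_iff subobj_iff)
  have A0C: "A0 \<subseteq> C" using smap_ker[OF f] by blast
  have fA0: "f ` A0 = {0}" using smap_img_ker[OF f C] .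
  have CAs: "is_submod M (C \<inter> A)" using submod_inter[OF C As] .
  have A0CA: "A0 \<subseteq> C \<inter> A" using A0C A0A by blast
  have Us: "is_submod N (f ` (C \<inter> A))" using smap_img_submod[OF f C CAs] by blast
  have "subobj \<iota> G M C" using strict_subobj[OF Cst] .
  then have "sq_in \<iota> G M (A \<inter> C) {0}" using Ast unfolding strict_iff by blast
  moreover have "A \<inter> C = C \<inter> A" by blast
  ultimately have "sq_in \<iota> G M (C \<inter> A) {0}" by simp
  then have "sq_in \<iota> G M (C \<inter> A) A0" using G1[OF _ submod_zero A0s CAs] A0s A0CA
    by (auto simp: submod_alt)
  then have UG: "sq_in \<iota> G N (f ` (C \<inter> A)) {0}" using Tsq[OF f C A0s CAs order_refl A0CA Int_lower1] fA0 by simp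
  have "sq_in \<iota> G N (f ` (C \<inter> A) \<inter> Bb) {0}" if Bb: "subobj \<iota> G N Bb" for Bb
  proof -
    note pre = pre_subobj[OF f C A0G Bb]
    define P where "P = {v\<in>C. f v \<in> Bb}"
    have Po: "subobj \<iota> G M P" using pre(5) unfolding P_def .
    have Ps: "is_submod M P" using pre(1) unfolding P_def .
    have APs: "is_submod M (A \<inter> P)" using submod_inter[OF As Ps] .
    have A0AP: "A0 \<subseteq> A \<inter> P" using pre(2) A0A unfolding P_def by blast
    have APC: "A \<inter> P \<subseteq> C" unfolding P_def by blast
    have "sq_in \<iota> G M (A \<inter> P) {0}" using Ast Po by (simp add: strict_iff)
    then have "sq_in \<iota> G M (A \<inter> P) A0" using G1[OF _ submod_zero A0s APs] A0s A0AP
      by (auto simp: submod_alt)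
    then have "sq_in \<iota> G N (f ` (A \<inter> P)) {0}" using Tsq[OF f C A0s APs order_refl A0AP APC] fA0 by simp
    moreover have "f ` (C \<inter> A) \<inter> Bb = f ` (A \<inter> P)"
    proof
      show "f ` (C \<inter> A) \<inter> Bb \<subseteq> f ` (A \<inter> P)" unfolding P_def by auto
      show "f ` (A \<inter> P) \<subseteq> f ` (C \<inter> A) \<inter> Bb" unfolding P_def by auto
    qed
    ultimately show ?thesis by simp
  qed
  then show ?thesis using Us UG by (simp add: strict_subobj_def subobj_def)
qed

end


lemma RA1:
  fixes g g' :: "real \<Rightarrow> real"
  assumes der: "\<And>t. (g has_real_derivative g' t) (at t)"
    and pos: "\<And>r. r \<ge> s \<Longrightarrow> g r = 0 \<Longrightarrow> g' r > 0"
    and gs: "g s > 0" and r: "r \<ge> s"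
  shows "g r > 0"
proof (rule ccontr)
  assume "\<not> g r > 0"
  then have gr: "g r \<le> 0" by simp
  have cont: "continuous_on UNIV g"
    using der by (intro continuous_at_imp_continuous_on) (auto intro: DERIV_isCont)
  then have contI: "continuous_on {a..b} g" for a b using continuous_on_subset by blast
  define Z where "Z = {x. s \<le> x \<and> x \<le> r \<and> g x = 0}"
  have "Z \<noteq> {}" using IVT2'[of g r 0 s, OF gr _ r contI] gs unfolding Z_def by auto
  moreover have "closed Z" unfolding Z_def
    by (intro closed_Collect_conj closed_Collect_le closed_Collect_eq cont continuous_on_const continuous_on_id)
  moreover have bdd: "bdd_below Z" unfolding Z_def by (auto intro: bdd_belowI)
  ultimately have x0Z: "Inf Z \<in> Z" using closed_contains_Inf by blast
  define x0 where "x0 = Inf Z"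
  have x0: "s \<le> x0" "x0 \<le> r" "g x0 = 0" using x0Z unfolding x0_def Z_def by auto
  have sx0: "s < x0" using x0 gs by (cases "s = x0") auto
  have below: "g x > 0" if x: "s \<le> x" "x < x0" for x
  proof (rule ccontr)
    assume "\<not> g x > 0"
    then obtain z where z: "s \<le> z" "z \<le> x" "g z = 0"
      using IVT2'[of g x 0 s, OF _ _ x(1) contI] gs by auto
    then have "z \<in> Z" using x x0 unfolding Z_def by auto
    then have "x0 \<le> z" unfolding x0_def using bdd by (rule cInf_lower)
    then show False using z x by simp
  qed
  have "g' x0 > 0" using pos x0 by simp
  then obtain d where d: "d > 0" "\<forall>h>0. h < d \<longrightarrow> g (x0 - h) < g x0"
    using DERIV_pos_inc_left[OF der] by blast
  define h where "h = min (d / 2) ((x0 - s) / 2)"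
  have h: "h > 0" "h < d" using d sx0 unfolding h_def by auto
  have "g (x0 - h) < 0" using d(2) h x0 by auto
  moreover have "h \<le> (x0 - s) / 2" unfolding h_def by (rule min.cobounded2)
  then have "g (x0 - h) > 0" using below[of "x0 - h"] h sx0 by simp
  ultimately show False by simp
qed

lemma RA:
  fixes g g' :: "real \<Rightarrow> real"
  assumes der: "\<And>t. (g has_real_derivative g' t) (at t)"
    and pos: "\<And>r. r \<ge> s \<Longrightarrow> g r = 0 \<Longrightarrow> g' r > 0"
    and gs: "g s \<ge> 0" and r: "r > s"
  shows "g r > 0"
proof (cases "g s > 0")
  case True
  show ?thesis by (rule RA1[OF der pos True]) (use r in auto)
next
  case False
  then have g0: "g s = 0" using gs by linarith
  have "g' s > 0" by (rule pos) (use g0 in auto)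
  then obtain d where d: "d > 0" and dd: "\<And>h. h > 0 \<Longrightarrow> h < d \<Longrightarrow> g s < g (s + h)"
    using DERIV_pos_inc_right[OF der] by blast
  show ?thesis
  proof (cases "r < s + d")
    case True
    have "g s < g (s + (r - s))" by (rule dd) (use True r in auto)
    then show ?thesis using g0 by simp
  next
    case False
    have "g s < g (s + d / 2)" by (rule dd) (use d in auto)
    then have p: "g (s + d / 2) > 0" using g0 by linarith
    have q: "g' r' > 0" if "r' \<ge> s + d / 2" "g r' = 0" for r'
      by (rule pos) (use that d in auto)
    show ?thesis by (rule RA1[OF der q p]) (use False d in auto)
  qed
qed


context tcm begin

lemma mono_pos:
  assumes MG: "M \<in> G"
    and V: "\<And>t. in_V \<iota> (\<theta> t)"
    and sm: "\<And>N. is_rmod \<iota> N \<Longrightarrow> smooth_real (\<lambda>t. \<theta> t N)"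
    and gr: "\<And>t0 N. N \<in> G \<Longrightarrow> nonzero_mod N \<Longrightarrow> \<theta> t0 \<in> DG \<iota> G N \<Longrightarrow> deriv (\<lambda>t. \<theta> t N) t0 > 0"
    and pge: "\<And>A. strict_subobj \<iota> G M A \<Longrightarrow> theta_sec \<iota> (\<theta> s) M (mcar M) A \<ge> 0"
  shows "\<And>A u. strict_subobj \<iota> G M A \<Longrightarrow> A \<noteq> mcar M \<Longrightarrow> s < u \<Longrightarrow> theta_sec \<iota> (\<theta> u) M (mcar M) A > 0"
proof -
  have Cst: "strict_subobj \<iota> G M (mcar M)" using strict_mcar[OF MG] .
  have main: "\<forall>A. strict_subobj \<iota> G M A \<longrightarrow> A \<noteq> mcar M \<longrightarrow> fst M - VS.dim A = n \<longrightarrow>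
      (\<forall>r>s. theta_sec \<iota> (\<theta> r) M (mcar M) A > 0)" for n
  proof (induction n rule: less_induct)
    case (less n)
    show ?case
    proof (intro allI impI)
      fix A r assume Ast: "strict_subobj \<iota> G M A" and AM: "A \<noteq> mcar M" and nA: "fst M - VS.dim A = n"
        and r: "s < r"
      have As: "is_submod M A" using strict_submod[OF Ast] .
      have AMs: "A \<subseteq> mcar M" using As by (simp add: submod_alt)
      obtain N f where f: "smap \<iota> M (mcar M) A N f" using quot_exists[OF As submod_mcar] AMs by blast
      interpret N: tcm \<iota> N G by (intro tcm.intro tcm_axioms.intro rmod.intro smap_rmod[OF f] tc)
      have th: "theta_sec \<iota> (\<theta> t) M (mcar M) A = \<theta> t N" for t using theta_smap[OF V f submod_mcar] .
      have "sq_in \<iota> G M (mcar M) A" using G1[OF G_self[OF MG] submod_zero As submod_mcar] As AMs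
        by (auto simp: submod_alt)
      then have NG: "N \<in> G" using sq_in_smap[OF _ f submod_mcar] by blast
      have NZ: "nonzero_mod N"
      proof (rule ccontr)
        assume "\<not> nonzero_mod N"
        then have "mcar N = {0}" by (simp add: nonzero_mod_def)
        then have "\<forall>v\<in>mcar M. f v = 0" using smap_img[OF f] by blast
        then have "A = mcar M" using smap_ker[OF f] by blast
        then show False using AM by simp
      qed
      have fA: "f ` A = {0}" using smap_img_ker[OF f submod_mcar] .
      have DG: "\<theta> t \<in> DG \<iota> G N" if t: "t \<ge> s" "\<theta> t N = 0" for t
        unfolding DG_def
      proof (intro CollectI conjI allI impI)
        show "\<theta> t N = 0" using t by simp
        fix Ab assume Abst: "strict_subobj \<iota> G N Ab"
        define P where "P = {v\<in>mcar M. f v \<in> Ab}"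
        have Pst: "strict_subobj \<iota> G M P" unfolding P_def using pre_strict[OF f Cst Ast Abst] .
        have Ps: "is_submod M P" using strict_submod[OF Pst] .
        have AsG: "sq_in \<iota> G M A {0}" using Ast by (simp add: strict_iff subobj_iff)
        note pre = pre_subobj[OF f submod_mcar AsG N.strict_subobj[OF Abst], folded P_def]
        have e1: "theta_sec \<iota> (\<theta> t) N Ab {vzero} = theta_sec \<iota> (\<theta> t) M P A"
          using Ttheta[OF V f submod_mcar As Ps order_refl pre(2) pre(3)] pre(4) fA by simp
        have e2: "theta_sec \<iota> (\<theta> t) M (mcar M) A = theta_sec \<iota> (\<theta> t) M (mcar M) P + theta_sec \<iota> (\<theta> t) M P A"
          using theta_add[OF V As Ps submod_mcar pre(2) pre(3)] .
        show "theta_sec \<iota> (\<theta> t) N Ab {vzero} \<le> 0"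
        proof (cases "P = A")
          case True
          then show ?thesis using e1 theta_same[OF V As] by simp
        next
          case PA: False
          have "theta_sec \<iota> (\<theta> t) M (mcar M) P \<ge> 0"
          proof (cases "P = mcar M")
            case True then show ?thesis using theta_same[OF V submod_mcar] by simp
          next
            case PM: False
            show ?thesis
            proof (cases "t = s")
              case True then show ?thesis using pge[OF Pst] by simp
            next
              case False
              then have ts: "s < t" using t by simp
              have APs: "A \<subset> P" using pre(2) PA by blast
              have dd: "VS.dim A < VS.dim P" "VS.dim P \<le> fst M"
                using dim_strict[OF submod_subspace[OF As] submod_subspace[OF Ps] APs, of "fst M"]
                  pre(3) by (auto simp: mcar_def)
              then have "fst M - VS.dim P < n" using nA by simp
              then have "\<forall>r>s. theta_sec \<iota> (\<theta> r) M (mcar M) P > 0"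
                using less.IH Pst PM by blast
              then show ?thesis using ts by fastforce
            qed
          qed
          then show ?thesis using e1 e2 t th by simp
        qed
      qed
      obtain D where D: "D 0 = (\<lambda>t. \<theta> t N)" "\<And>n t. (D n has_real_derivative D (Suc n) t) (at t)"
        using sm[OF N.rm] unfolding smooth_real_def by blast
      have der: "((\<lambda>t. \<theta> t N) has_real_derivative D 1 t) (at t)" for t using D by (metis One_nat_def)
      have pos: "D 1 t > 0" if "t \<ge> s" "\<theta> t N = 0" for t
      proof -
        have "deriv (\<lambda>t. \<theta> t N) t > 0" using gr[OF NG NZ DG[OF that]] .
        moreover have "deriv (\<lambda>t. \<theta> t N) t = D 1 t" using DERIV_imp_deriv[OF der] .
        ultimately show ?thesis by simp
      qed
      have gs: "\<theta> s N \<ge> 0" using pge[OF Ast] th by simp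
      have "\<theta> r N > 0" using RA[of "\<lambda>t. \<theta> t N" "D 1" s r, OF der pos gs r] by simp
      then show "theta_sec \<iota> (\<theta> r) M (mcar M) A > 0" using th by simp
    qed
  qed
  fix A u assume "strict_subobj \<iota> G M A" "A \<noteq> mcar M" "s < u"
  then show "theta_sec \<iota> (\<theta> u) M (mcar M) A > 0" using main by blast
qed

end


lemma tc_rmod: "torsion_class \<iota> G \<Longrightarrow> N \<in> G \<Longrightarrow> is_rmod \<iota> N"
  unfolding torsion_class_def by blast

lemma pge_W:
  assumes tc: "torsion_class \<iota> G" and V: "in_V \<iota> \<theta>" and XW: "X \<in> WG \<iota> G \<theta>"
    and Ast: "strict_subobj \<iota> G X A"
  shows "theta_sec \<iota> \<theta> X (mcar X) A \<ge> 0"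
proof -
  have XG: "X \<in> G" and D: "\<theta> \<in> DG \<iota> G X" using XW by (auto simp: WG_def)
  interpret X: tcm \<iota> X G by (intro tcm.intro tcm_axioms.intro rmod.intro tc_rmod[OF tc XG] tc)
  have As: "is_submod X A" using X.strict_submod[OF Ast] .
  have A0: "{0} \<subseteq> A" "A \<subseteq> mcar X" using As by (auto simp: submod_alt)
  have e: "theta_sec \<iota> \<theta> X (mcar X) {0} = theta_sec \<iota> \<theta> X (mcar X) A + theta_sec \<iota> \<theta> X A {0}"
    using X.theta_add[OF V X.submod_zero As X.submod_mcar A0] .
  have "theta_sec \<iota> \<theta> X (mcar X) {0} = \<theta> X" using X.theta_smap[OF V smap_id[OF X.rm] X.submod_mcar] .
  moreover have "\<theta> X = 0" "theta_sec \<iota> \<theta> X A {0} \<le> 0" using D Ast by (auto simp: DG_def)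
  ultimately show ?thesis using e by simp
qed

theorem mainTheorem20:
  fixes \<iota> :: "'k::field \<Rightarrow> 'l::ring_1"
    and G :: "('k, 'l) rmod set"
    and \<theta> :: "real \<Rightarrow> ('k, 'l) rmod \<Rightarrow> real"
    and t0 :: real and M :: "('k, 'l) rmod"
    and m :: nat and Ms :: "nat \<Rightarrow> (nat \<Rightarrow> 'k) set" and t :: "nat \<Rightarrow> real"
  assumes "fd_algebra \<iota>"
    and "torsion_class \<iota> G"
    and "smooth_green_path \<iota> G \<theta>"
    and "M \<in> G" and "nonzero_mod M"
    and "Ms 0 = mcar M" and "Ms m = {vzero}"
    and "\<forall>k\<in>{1..m}. Ms k \<subset> Ms (k - 1)"
    and "\<forall>k\<le>m. strict_subobj \<iota> G M (Ms k)"
    and "\<forall>k\<in>{1..m}. \<exists>X. sec_iso \<iota> M (Ms (k - 1)) (Ms k) X \<and> X \<in> WG \<iota> G (\<theta> (t k))"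
    and "\<forall>i j. 1 \<le> i \<longrightarrow> i < j \<longrightarrow> j \<le> m \<longrightarrow> t j < t i"
  shows "(M \<in> PG \<iota> G (\<theta> t0) \<longleftrightarrow> (\<forall>k\<in>{1..m}. t k < t0)) \<and>
         (M \<in> PG \<iota> G (\<theta> t0) \<longleftrightarrow> t 1 < t0)"
proof -
  note tc = assms(2) and MG = assms(4) and NZ = assms(5) and Ms0 = assms(6) and Msm = assms(7)
    and chain = assms(8) and strict = assms(9) and facs = assms(10) and dec = assms(11)
  have rM: "is_rmod \<iota> M" using tc_rmod[OF tc MG] .
  interpret tcm \<iota> M G using tc rM by (intro tcm.intro tcm_axioms.intro rmod.intro)
  have V: "\<And>t. in_V \<iota> (\<theta> t)" and sm: "\<And>N. is_rmod \<iota> N \<Longrightarrow> smooth_real (\<lambda>t. \<theta> t N)"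
    and gr: "\<And>t0 N. N \<in> G \<Longrightarrow> nonzero_mod N \<Longrightarrow> \<theta> t0 \<in> DG \<iota> G N \<Longrightarrow> deriv (\<lambda>t. \<theta> t N) t0 > 0"
    using assms(3) unfolding smooth_green_path_def by blast+
  have m1: "m \<ge> 1"
  proof (rule ccontr)
    assume "\<not> m \<ge> 1"
    then have "m = 0" by simp
    then show False using Ms0 Msm NZ by (simp add: nonzero_mod_def)
  qed
  obtain Xf where Xf: "\<And>k. k \<in> {1..m} \<Longrightarrow> sec_iso \<iota> M (Ms (k - 1)) (Ms k) (Xf k) \<and> Xf k \<in> WG \<iota> G (\<theta> (t k))"
    using bchoice[OF facs] by blast
  have Mss: "\<And>k. k \<le> m \<Longrightarrow> is_submod M (Ms k)" using strict strict_submod by blast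
  have Mst: "\<And>k. k \<le> m \<Longrightarrow> strict_subobj \<iota> G M (Ms k)" using strict by blast
  have PGiff: "M \<in> PG \<iota> G (\<theta> t0) \<longleftrightarrow>
      (\<forall>A. strict_subobj \<iota> G M A \<longrightarrow> A \<noteq> mcar M \<longrightarrow> theta_sec \<iota> (\<theta> t0) M (mcar M) A > 0)"
    using MG NZ by (auto simp: PG_def)
  have "sec_iso \<iota> M (mcar M) (Ms 1) (Xf 1)" using Xf[of 1] m1 Ms0 by auto
  then obtain f1 where f1: "smap \<iota> M (mcar M) (Ms 1) (Xf 1) f1" unfolding sec_iso_smap by blast
  have W1: "Xf 1 \<in> WG \<iota> G (\<theta> (t 1))" using Xf[of 1] m1 by auto
  have th1: "theta_sec \<iota> (\<theta> r) M (mcar M) (Ms 1) = \<theta> r (Xf 1)" for r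
    using theta_smap[OF V f1 submod_mcar] .
  have z1: "\<theta> (t 1) (Xf 1) = 0" using W1 by (auto simp: WG_def DG_def)
  have "Ms 1 \<subset> Ms (1 - 1)" using chain[rule_format, of 1] m1 by simp
  then have M1ne: "Ms 1 \<noteq> mcar M" using Ms0 by auto
  have tk1: "t k \<le> t 1" if "k \<in> {1..m}" for k
    using dec[rule_format, of 1 k] that by (cases "k = 1") auto
  have dir1: "t 1 < t0" if P: "M \<in> PG \<iota> G (\<theta> t0)"
  proof (rule ccontr)
    assume "\<not> t 1 < t0"
    then have le: "t0 \<le> t 1" by simp
    have pos: "\<And>A. strict_subobj \<iota> G M A \<Longrightarrow> A \<noteq> mcar M \<Longrightarrow> theta_sec \<iota> (\<theta> t0) M (mcar M) A > 0"
      using P PGiff by blast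
    show False
    proof (cases "t0 = t 1")
      case True
      then show False using pos[OF Mst[OF m1] M1ne] th1 z1 by simp
    next
      case False
      then have lt: "t0 < t 1" using le by simp
      have pge: "\<And>A. strict_subobj \<iota> G M A \<Longrightarrow> theta_sec \<iota> (\<theta> t0) M (mcar M) A \<ge> 0"
      proof -
        fix A assume "strict_subobj \<iota> G M A"
        then show "theta_sec \<iota> (\<theta> t0) M (mcar M) A \<ge> 0"
          using pos[of A] theta_same[OF V submod_mcar] by (cases "A = mcar M") auto
      qed
      have "theta_sec \<iota> (\<theta> (t 1)) M (mcar M) (Ms 1) > 0"
        using mono_pos[OF MG V sm gr pge Mst[OF m1] M1ne lt] .
      then show False using th1 z1 by simp
    qed
  qed
  have dir2: "M \<in> PG \<iota> G (\<theta> t0)" if T: "\<forall>k\<in>{1..m}. t k < t0"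
  proof -
    have C: "\<forall>A. strict_subobj \<iota> G M A \<longrightarrow> Ms k \<subseteq> A \<longrightarrow> A \<noteq> mcar M \<longrightarrow>
        theta_sec \<iota> (\<theta> t0) M (mcar M) A > 0" if "k \<le> m" for k
      using that
    proof (induction k)
      case 0
      show ?case
      proof (intro allI impI)
        fix A assume "strict_subobj \<iota> G M A" "Ms 0 \<subseteq> A" "A \<noteq> mcar M"
        moreover have "A \<subseteq> mcar M" using strict_submod[OF \<open>strict_subobj \<iota> G M A\<close>] by (simp add: submod_alt)
        ultimately show "theta_sec \<iota> (\<theta> t0) M (mcar M) A > 0" using Ms0 by auto
      qed
    next
      case (Suc k)
      have IH: "\<forall>A. strict_subobj \<iota> G M A \<longrightarrow> Ms k \<subseteq> A \<longrightarrow> A \<noteq> mcar M \<longrightarrow>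
        theta_sec \<iota> (\<theta> t0) M (mcar M) A > 0" using Suc by simp
      have j: "Suc k \<in> {1..m}" using Suc.prems by simp
      have "sec_iso \<iota> M (Ms k) (Ms (Suc k)) (Xf (Suc k))" using Xf[OF j] by simp
      then obtain f where f: "smap \<iota> M (Ms k) (Ms (Suc k)) (Xf (Suc k)) f" unfolding sec_iso_smap by blast
      have WX: "Xf (Suc k) \<in> WG \<iota> G (\<theta> (t (Suc k)))" using Xf[OF j] by auto
      have tj: "t (Suc k) < t0" using T j by blast
      have kst: "strict_subobj \<iota> G M (Ms k)" using Mst[of k] Suc.prems by simp
      have jst: "strict_subobj \<iota> G M (Ms (Suc k))" using Mst[of "Suc k"] Suc.prems by simp
      have ks: "is_submod M (Ms k)" using strict_submod[OF kst] .
      have js: "is_submod M (Ms (Suc k))" using strict_submod[OF jst] .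
      have "Ms (Suc k) \<subset> Ms (Suc k - 1)" using chain[rule_format, OF j] .
      then have jk: "Ms (Suc k) \<subseteq> Ms k" by auto
      show ?case
      proof (intro allI impI)
        fix A assume Ast: "strict_subobj \<iota> G M A" and jA: "Ms (Suc k) \<subseteq> A" and AM: "A \<noteq> mcar M"
        show "theta_sec \<iota> (\<theta> t0) M (mcar M) A > 0"
        proof (cases "Ms k \<subseteq> A")
          case True then show ?thesis using IH Ast AM by blast
        next
          case nkA: False
          have As: "is_submod M A" using strict_submod[OF Ast] .
          define S where "S = ssum (Ms k) A"
          have Sst: "strict_subobj \<iota> G M S" unfolding S_def using strict_sum[OF kst Ast] .
          have Ss: "is_submod M S" using strict_submod[OF Sst] .
          have AS: "A \<subseteq> S" unfolding S_def using ssum_sub2[OF ks] .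
          have kS: "Ms k \<subseteq> S" unfolding S_def using ssum_sub1[OF As] .
          have SM: "S \<subseteq> mcar M" using Ss by (simp add: submod_alt)
          have e1: "theta_sec \<iota> (\<theta> t0) M (mcar M) A = theta_sec \<iota> (\<theta> t0) M (mcar M) S + theta_sec \<iota> (\<theta> t0) M S A"
            using theta_add[OF V As Ss submod_mcar AS SM] .
          have t1: "theta_sec \<iota> (\<theta> t0) M (mcar M) S \<ge> 0"
          proof (cases "S = mcar M")
            case True then show ?thesis using theta_same[OF V submod_mcar] by simp
          next
            case False then show ?thesis using IH Sst kS by fastforce
          qed
          have e2: "theta_sec \<iota> (\<theta> t0) M S A = theta_sec \<iota> (\<theta> t0) M (Ms k) (Ms k \<inter> A)"
            unfolding S_def using iso2_theta[OF V ks As] .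
          have kAs: "is_submod M (Ms k \<inter> A)" using submod_inter[OF ks As] .
          have sub: "Ms (Suc k) \<subseteq> Ms k \<inter> A" using jk jA by blast
          have e3: "theta_sec \<iota> (\<theta> t0) (Xf (Suc k)) (f ` Ms k) (f ` (Ms k \<inter> A)) = theta_sec \<iota> (\<theta> t0) M (Ms k) (Ms k \<inter> A)"
            using Ttheta[OF V f ks kAs ks sub Int_lower1 order_refl] .
          have img: "f ` Ms k = mcar (Xf (Suc k))" using smap_img[OF f] .
          have Ust: "strict_subobj \<iota> G (Xf (Suc k)) (f ` (Ms k \<inter> A))"
            using img_strict[OF f kst jst Ast jA] .
          have Une: "f ` (Ms k \<inter> A) \<noteq> mcar (Xf (Suc k))"
          proof
            assume eq: "f ` (Ms k \<inter> A) = mcar (Xf (Suc k))"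
            have "Ms k \<subseteq> A"
            proof
              fix v assume v: "v \<in> Ms k"
              then have "f v \<in> f ` (Ms k \<inter> A)" using eq img by blast
              then obtain a where a: "a \<in> Ms k" "a \<in> A" "f v = f a" by blast
              then have "v - a \<in> Ms (Suc k)" using smap_eq_iff[OF f ks v] by blast
              then have "v - a \<in> A" using jA by blast
              then have "(v - a) + a \<in> A" using a As unfolding submod_alt by blast
              then show "v \<in> A" by simp
            qed
            then show False using nkA by simp
          qed
          have XG: "Xf (Suc k) \<in> G" using WX by (simp add: WG_def)
          interpret X: tcm \<iota> "Xf (Suc k)" G
            by (intro tcm.intro tcm_axioms.intro rmod.intro tc_rmod[OF tc XG] tc)
          have pgeX: "\<And>A'. strict_subobj \<iota> G (Xf (Suc k)) A' \<Longrightarrow> theta_sec \<iota> (\<theta> (t (Suc k))) (Xf (Suc k)) (mcar (Xf (Suc k))) A' \<ge> 0"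
            using pge_W[OF tc V WX] by blast
          have "theta_sec \<iota> (\<theta> t0) (Xf (Suc k)) (mcar (Xf (Suc k))) (f ` (Ms k \<inter> A)) > 0"
            using X.mono_pos[OF XG V sm gr pgeX Ust Une tj] .
          then show ?thesis using e1 t1 e2 e3 img by simp
        qed
      qed
    qed
    have "\<forall>A. strict_subobj \<iota> G M A \<longrightarrow> A \<noteq> mcar M \<longrightarrow> theta_sec \<iota> (\<theta> t0) M (mcar M) A > 0"
    proof (intro allI impI)
      fix A assume Ast: "strict_subobj \<iota> G M A" and AM: "A \<noteq> mcar M"
      have "Ms m \<subseteq> A" using Msm strict_submod[OF Ast] by (simp add: submod_alt)
      then show "theta_sec \<iota> (\<theta> t0) M (mcar M) A > 0" using C[OF order_refl] Ast AM by blast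
    qed
    then show ?thesis using PGiff by blast
  qed
  have "M \<in> PG \<iota> G (\<theta> t0) \<longleftrightarrow> t 1 < t0"
  proof (rule iffI)
    assume "M \<in> PG \<iota> G (\<theta> t0)"
    then show "t 1 < t0" by (rule dir1)
  next
    assume "t 1 < t0"
    then have "\<forall>k\<in>{1..m}. t k < t0" using tk1 by fastforce
    then show "M \<in> PG \<iota> G (\<theta> t0)" using dir2 by blast
  qed
  moreover have "(\<forall>k\<in>{1..m}. t k < t0) \<longleftrightarrow> t 1 < t0" using tk1 m1 by fastforce
  ultimately show ?thesis by simp
qed


end
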